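(* Let $V$ be a finite-dimensional real vector space with a positive definite inner product $\langle\cdot,\cdot\rangle$, and let $\mathbf L:[t_0-\varepsilon,t_0+\varepsilon]\to\mathcal L_{\mathrm{sym}}(V)$ be a smooth curve of symmetric operators such that $\mathbf L(t)$ is invertible for all $t\neq t_0$ and $\mathbf L(t_0)$ is not invertible. Let $\lambda_1(t),\dots,\lambda_n(t)$ be smooth functions giving the eigenvalues of $\mathbf L(t)$, and assume: (a) every non-constant $\lambda_i$ has a zero of finite order at $t=t_0$; (b) there exist smooth maps $\mathfrak v_i:[t_0-\varepsilon,t_0+\varepsilon]\to V$, $i=1,\dots,n$, such that for each $t$ the vectors $\mathfrak v_1(t),\dots,\mathfrak v_n(t)$ are pairwise orthogonal unit vectors with $\mathbf L(t)\mathfrak v_i(t)=\lambda_i(t)\mathfrak v_i(t)$. Then: (1) $W_k=\mathrm{span}\{\mathfrak v_i(t_0): \lambda_i^{(j)}(t_0)=0 \text{ for all } 0\le j<k\}$ for every $k\ge1$; (2) if $v\in W_k$ is an eigenvector of $\mathbf L(t_0)$ of the form $v=\mathfrak v_i(t_0)$ (or a multiple) with $\lambda_i(t_0)=\lambda_i'(t_0)=\dots=\lambda_i^{(k-1)}(t_0)=0$, then $B_k(v,w)=\frac1{k!}\lambda_i^{(k)}(t_0)\langle v,w\rangle$ for all $w\in W_k$; (3) the following hold, where all sums have only finitely many nonzero terms: $n^+(\mathbf L(t_0+\varepsilon))-n^+(\mathbf L(t_0))=\sum_{k\ge1}n^+_k(\mathbf L,t_0)$; $n^+(\mathbf L(t_0))-n^+(\mathbf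 L(t_0-\varepsilon))=-\sum_{k\ge1}\big(n^-_{2k-1}(\mathbf L,t_0)+n^+_{2k}(\mathbf L,t_0)\big)$; $n^+(\mathbf L(t_0+\varepsilon))-n^+(\mathbf L(t_0-\varepsilon))=\sum_{k\ge1}\sigma_{2k-1}(\mathbf L,t_0)$; $\bar n^+(\mathbf L(t_0+\varepsilon))-\bar n^+(\mathbf L(t_0))=\sum_{k\ge1}n^+_k(\mathbf L,t_0)-\dim\mathrm{Ker}\,\mathbf L(t_0)$; $\bar n^+(\mathbf L(t_0))-\bar n^+(\mathbf L(t_0-\varepsilon))=-\sum_{k\ge1}\big(n^-_{2k-1}(\mathbf L,t_0)+n^+_{2k}(\mathbf L,t_0)\big)+\dim\mathrm{Ker}\,\mathbf L(t_0)$.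
   Context: Operators and symmetric bilinear forms are identified via $T\mapsto\langle T\cdot,\cdot\rangle$. For a symmetric bilinear form $B$ on a finite-dimensional space: $n^-(B)$ (index) and $n^+(B)$ (coindex) are the numbers of negative and positive entries in a diagonal (Sylvester) form, $n_0(B)=\dim\mathrm{Ker}(B)$, $\bar n^+(B)=n^+(B)+n_0(B)$ (extended coindex), $\sigma(B)=n^+(B)-n^-(B)$. Partial signatures: let $\mathbf L$ be a smooth curve of bounded self-adjoint operators on a real Hilbert space $\mathcal H$ with inner product $\langle\cdot,\cdot\rangle$, defined on an interval containing $t_0$ (one-sided derivatives are used if $t_0$ is an endpoint), such that $t_0$ is an isolated degeneracy instant ($\mathbf L(t_0)$ has a nontrivial finite-dimensional kernel and $\mathbf L(t)$ is invertible for $t\neq t_0$ near $t_0$). A root function for $\mathbf L$ at $t_0$ is a smooth map $u$ from a neighborhood of $t_0$ into $\mathcal H$ with $u(t_0)\in\mathrm{Ker}\,\mathbf L(t_0)$; its order $\mathrm{ord}(u)$ is the (possibly infinite) order of vanishing at $t_0$ of $t\mapsto\mathbf L(t)u(t)$. For $k\ge1$, $W_k=\{u(t_0): u \text{ root function with } \mathrm{ord}(u)\ge k\}\subseteq\mathrm{Ker}\,\mathbf L(t_0)$, and $B_k(u_0,v_0)=\frac1{k!}\big\langle\frac{d^k}{dt^k}\big|_{t=t_0}[\mathbf L(t)u(t)],v_0\big\rangle$ for $u_0,v_0\in W_k$, where $u$ is any root function with $\mathrm{ord}(u)\ge k$ and $u(t_0)=u_0$; $B_k$ is a well-defined symmetric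 bilinear form on $W_k$. The $k$-th partial index, coindex and signature are $n^-_k(\mathbf L,t_0)=n^-(B_k)$, $n^+_k(\mathbf L,t_0)=n^+(B_k)$, $\sigma_k(\mathbf L,t_0)=\sigma(B_k)$. *)

theory Defs
  imports "HOL-Analysis.Analysis"
begin

definition deriv_seq :: "real set \<Rightarrow> (real \<Rightarrow> 'a::real_normed_vector) \<Rightarrow> (nat \<Rightarrow> real \<Rightarrow> 'a) \<Rightarrow> bool" where
  "deriv_seq S f D \<longleftrightarrow> (\<forall>t\<in>S. D 0 t = f t) \<and>
     (\<forall>n. \<forall>t\<in>S. (D n has_vector_derivative D (Suc n) t) (at t within S))"

definition smooth_on :: "real set \<Rightarrow> (real \<Rightarrow> 'a::real_normed_vector) \<Rightarrow> bool" where
  "smooth_on S f \<longleftrightarrow> (\<exists>D. deriv_seq S f D)"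

text \<open>n-th derivative of f within S (well defined on S when S is a nondegenerate interval)\<close>
definition hderiv :: "real set \<Rightarrow> (real \<Rightarrow> 'a::real_normed_vector) \<Rightarrow> nat \<Rightarrow> real \<Rightarrow> 'a" where
  "hderiv S f = (SOME D. deriv_seq S f D)"

definition diag_basis :: "('v::real_vector \<Rightarrow> 'v \<Rightarrow> real) \<Rightarrow> 'v set \<Rightarrow> 'v set \<Rightarrow> bool" where
  "diag_basis B W b \<longleftrightarrow> b \<subseteq> W \<and> independent b \<and> span b = W \<and>
     (\<forall>x\<in>b. \<forall>y\<in>b. x \<noteq> y \<longrightarrow> B x y = 0)"

definition coindex_form :: "('v::real_vector \<Rightarrow> 'v \<Rightarrow> real) \<Rightarrow> 'v set \<Rightarrow> nat" where
  "coindex_form B W = card {x \<in> (SOME b. diag_basis B W b). B x x > 0}"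

definition index_form :: "('v::real_vector \<Rightarrow> 'v \<Rightarrow> real) \<Rightarrow> 'v set \<Rightarrow> nat" where
  "index_form B W = card {x \<in> (SOME b. diag_basis B W b). B x x < 0}"

definition signature_form :: "('v::real_vector \<Rightarrow> 'v \<Rightarrow> real) \<Rightarrow> 'v set \<Rightarrow> int" where
  "signature_form B W = int (coindex_form B W) - int (index_form B W)"

definition op_form :: "('v::real_inner \<Rightarrow>\<^sub>L 'v) \<Rightarrow> 'v \<Rightarrow> 'v \<Rightarrow> real" where
  "op_form T x y = inner (blinfun_apply T x) y"

definition coindex_op :: "('v::euclidean_space \<Rightarrow>\<^sub>L 'v) \<Rightarrow> nat" where
  "coindex_op T = coindex_form (op_form T) UNIV"

definition nullity_op :: "('v::euclidean_space \<Rightarrow>\<^sub>L 'v) \<Rightarrow> nat" where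
  "nullity_op T = dim {x. blinfun_apply T x = 0}"

definition ext_coindex_op :: "('v::euclidean_space \<Rightarrow>\<^sub>L 'v) \<Rightarrow> nat" where
  "ext_coindex_op T = coindex_op T + nullity_op T"

definition nbhds_in :: "real set \<Rightarrow> real \<Rightarrow> real set set" where
  "nbhds_in S t0 = {S \<inter> cball t0 \<delta> | \<delta>. \<delta> > 0}"

definition is_root_fun :: "(real \<Rightarrow> ('v::euclidean_space \<Rightarrow>\<^sub>L 'v)) \<Rightarrow> real set \<Rightarrow> real \<Rightarrow> real set \<Rightarrow> (real \<Rightarrow> 'v) \<Rightarrow> bool" where
  "is_root_fun L S t0 T u \<longleftrightarrow> T \<in> nbhds_in S t0 \<and> smooth_on T u \<and> blinfun_apply (L t0) (u t0) = 0"

definition root_ord_ge :: "(real \<Rightarrow> ('v::euclidean_space \<Rightarrow>\<^sub>L 'v)) \<Rightarrow> real \<Rightarrow> real set \<Rightarrow> (real \<Rightarrow> 'v) \<Rightarrow> nat \<Rightarrow> bool" where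
  "root_ord_ge L t0 T u k \<longleftrightarrow> (\<forall>j<k. hderiv T (\<lambda>t. blinfun_apply (L t) (u t)) j t0 = 0)"

definition W_space :: "(real \<Rightarrow> ('v::euclidean_space \<Rightarrow>\<^sub>L 'v)) \<Rightarrow> real set \<Rightarrow> real \<Rightarrow> nat \<Rightarrow> 'v set" where
  "W_space L S t0 k = {u t0 | u T. is_root_fun L S t0 T u \<and> root_ord_ge L t0 T u k}"

definition B_form :: "(real \<Rightarrow> ('v::euclidean_space \<Rightarrow>\<^sub>L 'v)) \<Rightarrow> real set \<Rightarrow> real \<Rightarrow> nat \<Rightarrow> 'v \<Rightarrow> 'v \<Rightarrow> real" where
  "B_form L S t0 k u0 v0 = (SOME r. \<exists>u T. is_root_fun L S t0 T u \<and> root_ord_ge L t0 T u k \<and> u t0 = u0 \<and>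
      r = inner (hderiv T (\<lambda>t. blinfun_apply (L t) (u t)) k t0) v0 / fact k)"

definition partial_coindex :: "(real \<Rightarrow> ('v::euclidean_space \<Rightarrow>\<^sub>L 'v)) \<Rightarrow> real set \<Rightarrow> real \<Rightarrow> nat \<Rightarrow> nat" where
  "partial_coindex L S t0 k = coindex_form (B_form L S t0 k) (W_space L S t0 k)"

definition partial_index :: "(real \<Rightarrow> ('v::euclidean_space \<Rightarrow>\<^sub>L 'v)) \<Rightarrow> real set \<Rightarrow> real \<Rightarrow> nat \<Rightarrow> nat" where
  "partial_index L S t0 k = index_form (B_form L S t0 k) (W_space L S t0 k)"

definition partial_signature :: "(real \<Rightarrow> ('v::euclidean_space \<Rightarrow>\<^sub>L 'v)) \<Rightarrow> real set \<Rightarrow> real \<Rightarrow> nat \<Rightarrow> int" where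
  "partial_signature L S t0 k = signature_form (B_form L S t0 k) (W_space L S t0 k)"

end

theory Submission
  imports Defs
begin


lemma deriv_seq_subset: "deriv_seq S f D \<Longrightarrow> T \<subseteq> S \<Longrightarrow> deriv_seq T f D"
  unfolding deriv_seq_def by (meson has_vector_derivative_within_subset subsetD)

lemma deriv_seq_cong: "deriv_seq S f D \<Longrightarrow> (\<And>t. t \<in> S \<Longrightarrow> f t = g t) \<Longrightarrow> deriv_seq S g D"
  unfolding deriv_seq_def by auto

lemma deriv_seq_unique:
  fixes a b :: real
  assumes ab: "a < b" and D: "deriv_seq {a..b} f D" and E: "deriv_seq {a..b} f E"
  shows "\<forall>t\<in>{a..b}. D n t = E n t"
proof (induction n)
  case 0 then show ?case using D E unfolding deriv_seq_def by auto
next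
  case (Suc n)
  show ?case
  proof
    fix t assume t: "t \<in> {a..b}"
    have d1: "(D n has_vector_derivative D (Suc n) t) (at t within {a..b})" using D t unfolding deriv_seq_def by auto
    have d2: "(E n has_vector_derivative E (Suc n) t) (at t within {a..b})" using E t unfolding deriv_seq_def by auto
    have d3: "(D n has_vector_derivative E (Suc n) t) (at t within {a..b})"
      by (rule has_vector_derivative_transform[OF t _ d2]) (use Suc in auto)
    show "D (Suc n) t = E (Suc n) t"
      using vector_derivative_unique_within_closed_interval[of a b t "D n" "D (Suc n) t" "E (Suc n) t"] ab t d1 d3
      by auto
  qed
qed

lemma hderiv_eq:
  fixes a b :: real
  assumes ab: "a < b" and D: "deriv_seq {a..b} f D" and t: "t \<in> {a..b}"
  shows "hderiv {a..b} f n t = D n t"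
proof -
  have "deriv_seq {a..b} f (hderiv {a..b} f)" unfolding hderiv_def by (rule someI[of _ D]) (rule D)
  then show ?thesis using deriv_seq_unique[OF ab _ D] t by blast
qed

lemma deriv_seq_sum:
  assumes "\<And>i. i \<in> I \<Longrightarrow> deriv_seq S (f i) (D i)"
  shows "deriv_seq S (\<lambda>t. \<Sum>i\<in>I. f i t) (\<lambda>n t. \<Sum>i\<in>I. D i n t)"
  using assms unfolding deriv_seq_def by (auto intro!: has_vector_derivative_sum)

lemma hvd_scale: "(f has_vector_derivative f') F \<Longrightarrow> ((\<lambda>x. c *\<^sub>R f x) has_vector_derivative c *\<^sub>R f') F"
  by (rule bounded_linear.has_vector_derivative[OF bounded_linear_scaleR_right])

lemma deriv_seq_scale:
  assumes "deriv_seq S f D"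
  shows "deriv_seq S (\<lambda>t. c *\<^sub>R f t) (\<lambda>n t. c *\<^sub>R D n t)"
  using assms unfolding deriv_seq_def by (auto intro!: hvd_scale)

lemma binom_step:
  fixes P :: "nat \<Rightarrow> nat \<Rightarrow> 'a::real_vector"
  shows "(\<Sum>i\<le>n. real (n choose i) *\<^sub>R (P i (Suc (n - i)) + P (Suc i) (n - i)))
       = (\<Sum>i\<le>Suc n. real (Suc n choose i) *\<^sub>R P i (Suc n - i))"
proof -
  have r: "(\<Sum>i\<le>Suc n. real (Suc n choose i) *\<^sub>R P i (Suc n - i))
     = P 0 (Suc n) + (\<Sum>i\<le>n. real (n choose i) *\<^sub>R P (Suc i) (n - i))
       + (\<Sum>i\<le>n. real (n choose Suc i) *\<^sub>R P (Suc i) (n - i))"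
  proof -
    have "(\<Sum>i\<le>Suc n. real (Suc n choose i) *\<^sub>R P i (Suc n - i)) =
       real (Suc n choose 0) *\<^sub>R P 0 (Suc n - 0) + (\<Sum>i\<le>n. real (Suc n choose Suc i) *\<^sub>R P (Suc i) (Suc n - Suc i))"
      by (rule sum.atMost_Suc_shift)
    then show ?thesis by (simp add: scaleR_add_left sum.distrib)
  qed
  have l1: "(\<Sum>i\<le>n. real (n choose i) *\<^sub>R P i (Suc (n - i)))
      = P 0 (Suc n) + (\<Sum>i<n. real (n choose Suc i) *\<^sub>R P (Suc i) (Suc (n - Suc i)))"
    by (subst sum.atMost_shift) simp
  have l2: "(\<Sum>i\<le>n. real (n choose Suc i) *\<^sub>R P (Suc i) (n - i))
      = (\<Sum>i<n. real (n choose Suc i) *\<^sub>R P (Suc i) (n - i))"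
    by (simp add: lessThan_Suc_atMost[symmetric])
  have l3: "(\<Sum>i<n. real (n choose Suc i) *\<^sub>R P (Suc i) (Suc (n - Suc i)))
       = (\<Sum>i<n. real (n choose Suc i) *\<^sub>R P (Suc i) (n - i))"
    by (rule sum.cong) (auto simp: Suc_diff_Suc)
  have "(\<Sum>i\<le>n. real (n choose i) *\<^sub>R (P i (Suc (n - i)) + P (Suc i) (n - i))) =
     (\<Sum>i\<le>n. real (n choose i) *\<^sub>R P i (Suc (n - i))) + (\<Sum>i\<le>n. real (n choose i) *\<^sub>R P (Suc i) (n - i))"
    by (simp add: scaleR_add_right sum.distrib)
  then show ?thesis unfolding r l1 l2 l3 by (simp add: algebra_simps)
qed

lemma leibniz:
  fixes prod :: "'a::real_normed_vector \<Rightarrow> 'b::real_normed_vector \<Rightarrow> 'c::real_normed_vector"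
  assumes bb: "bounded_bilinear prod" and D: "deriv_seq S f D" and E: "deriv_seq S g E"
  shows "deriv_seq S (\<lambda>t. prod (f t) (g t))
           (\<lambda>n t. \<Sum>i\<le>n. real (n choose i) *\<^sub>R prod (D i t) (E (n - i) t))"
  unfolding deriv_seq_def
proof (intro conjI ballI allI)
  fix t assume "t \<in> S" then show "(\<Sum>i\<le>0. real (0 choose i) *\<^sub>R prod (D i t) (E (0 - i) t)) = prod (f t) (g t)"
    using D E unfolding deriv_seq_def by auto
next
  fix n t assume t: "t \<in> S"
  have "((\<lambda>t. \<Sum>i\<le>n. real (n choose i) *\<^sub>R prod (D i t) (E (n - i) t)) has_vector_derivative
      (\<Sum>i\<le>n. real (n choose i) *\<^sub>R (prod (D i t) (E (Suc (n - i)) t) + prod (D (Suc i) t) (E (n - i) t))))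
      (at t within S)"
    apply (intro has_vector_derivative_sum hvd_scale)
    apply (rule bounded_bilinear.has_vector_derivative[OF bb])
    using D E t unfolding deriv_seq_def by auto
  then show "((\<lambda>t. \<Sum>i\<le>n. real (n choose i) *\<^sub>R prod (D i t) (E (n - i) t)) has_vector_derivative
        (\<Sum>i\<le>Suc n. real (Suc n choose i) *\<^sub>R prod (D i t) (E (Suc n - i) t))) (at t within S)"
    using binom_step[of n "\<lambda>i j. prod (D i t) (E j t)"] by simp
qed

lemma leibniz_low:
  fixes prod :: "'a::real_normed_vector \<Rightarrow> 'b::real_normed_vector \<Rightarrow> 'c::real_normed_vector"
  assumes bb: "bounded_bilinear prod" and z: "\<And>i. i < m \<Longrightarrow> D i t = 0" and nm: "n < m"
  shows "(\<Sum>i\<le>n. real (n choose i) *\<^sub>R prod (D i t) (E (n - i) t)) = 0"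
  using z nm bounded_bilinear.zero_left[OF bb] by (intro sum.neutral) auto

lemma leibniz_top:
  fixes prod :: "'a::real_normed_vector \<Rightarrow> 'b::real_normed_vector \<Rightarrow> 'c::real_normed_vector"
  assumes bb: "bounded_bilinear prod" and z: "\<And>i. i < m \<Longrightarrow> D i t = 0"
  shows "(\<Sum>i\<le>m. real (m choose i) *\<^sub>R prod (D i t) (E (m - i) t)) = prod (D m t) (E 0 t)"
proof -
  have "(\<Sum>i\<le>m. real (m choose i) *\<^sub>R prod (D i t) (E (m - i) t)) =
     (\<Sum>i<m. real (m choose i) *\<^sub>R prod (D i t) (E (m - i) t)) + prod (D m t) (E 0 t)"
    by (simp add: lessThan_Suc_atMost[symmetric])
  also have "(\<Sum>i<m. real (m choose i) *\<^sub>R prod (D i t) (E (m - i) t)) = 0"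
    using z bounded_bilinear.zero_left[OF bb] by (intro sum.neutral) auto
  finally show ?thesis by simp
qed


definition leib :: "('a::real_normed_vector \<Rightarrow> 'b::real_normed_vector \<Rightarrow> 'c::real_normed_vector) \<Rightarrow> (nat \<Rightarrow> real \<Rightarrow> 'a) \<Rightarrow> (nat \<Rightarrow> real \<Rightarrow> 'b) \<Rightarrow> nat \<Rightarrow> real \<Rightarrow> 'c" where
  "leib pr D E = (\<lambda>n t. \<Sum>i\<le>n. real (n choose i) *\<^sub>R pr (D i t) (E (n - i) t))"

lemma leib_deriv:
  fixes pr :: "'a::real_normed_vector \<Rightarrow> 'b::real_normed_vector \<Rightarrow> 'c::real_normed_vector"
  assumes "bounded_bilinear pr" "deriv_seq S f D" "deriv_seq S g E"
  shows "deriv_seq S (\<lambda>t. pr (f t) (g t)) (leib pr D E)"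
  unfolding leib_def by (rule leibniz[OF assms])

lemma leib_vanish:
  fixes pr :: "'a::real_normed_vector \<Rightarrow> 'b::real_normed_vector \<Rightarrow> 'c::real_normed_vector"
  assumes bb: "bounded_bilinear pr" and z: "\<forall>i<m. D i t = 0"
  shows "(\<forall>j<m. leib pr D E j t = 0) \<and> leib pr D E m t = pr (D m t) (E 0 t)"
  unfolding leib_def using leibniz_low[OF bb, of m D t] leibniz_top[OF bb, of m D t] z by auto



lemma bil_sum_left:
  assumes "bilinear B" "finite A"
  shows "B (\<Sum>v\<in>A. u v *\<^sub>R v) z = (\<Sum>v\<in>A. u v * B v z)"
proof -
  have l: "linear (\<lambda>x. B x z)" using assms(1) unfolding bilinear_def by auto
  show ?thesis by (simp add: linear_sum[OF l] linear_scale[OF l])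
qed

lemma bil_sum_right:
  assumes "bilinear B" "finite A"
  shows "B z (\<Sum>v\<in>A. u v *\<^sub>R v) = (\<Sum>v\<in>A. u v * B z v)"
proof -
  have l: "linear (\<lambda>x. B z x)" using assms(1) unfolding bilinear_def by auto
  show ?thesis by (simp add: linear_sum[OF l] linear_scale[OF l])
qed

lemma diag_expand:
  fixes B :: "'v::real_vector \<Rightarrow> 'v \<Rightarrow> real"
  assumes bl: "bilinear B" and fin: "finite A" and d: "\<forall>v\<in>A. \<forall>w\<in>A. v \<noteq> w \<longrightarrow> B v w = 0"
  shows "B (\<Sum>v\<in>A. u v *\<^sub>R v) (\<Sum>v\<in>A. u v *\<^sub>R v) = (\<Sum>v\<in>A. (u v)^2 * B v v)"
proof -
  have "B (\<Sum>v\<in>A. u v *\<^sub>R v) (\<Sum>v\<in>A. u v *\<^sub>R v) = (\<Sum>v\<in>A. u v * B v (\<Sum>v\<in>A. u v *\<^sub>R v))"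
    by (rule bil_sum_left[OF bl fin])
  also have "\<dots> = (\<Sum>v\<in>A. u v * (\<Sum>w\<in>A. u w * B v w))"
    by (simp add: bil_sum_right[OF bl fin])
  also have "\<dots> = (\<Sum>v\<in>A. u v * (u v * B v v))"
  proof (rule sum.cong[OF refl])
    fix v assume v: "v \<in> A"
    have "(\<Sum>w\<in>A. u w * B v w) = (\<Sum>w\<in>A. if w = v then u v * B v v else 0)"
      by (rule sum.cong) (use d v in auto)
    also have "\<dots> = u v * B v v" using v fin by simp
    finally show "u v * (\<Sum>w\<in>A. u w * B v w) = u v * (u v * B v v)" by simp
  qed
  finally show ?thesis by (simp add: power2_eq_square mult.assoc)
qed

lemma span_form_pos:
  fixes B :: "'v::euclidean_space \<Rightarrow> 'v \<Rightarrow> real"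
  assumes bl: "bilinear B" and fin: "finite A" and d: "\<forall>v\<in>A. \<forall>w\<in>A. v \<noteq> w \<longrightarrow> B v w = 0"
    and y: "y \<in> span A" and pos: "\<forall>v\<in>A. B v v > 0" and ne: "y \<noteq> 0"
  shows "B y y > 0"
proof -
  obtain u where u: "y = (\<Sum>v\<in>A. u v *\<^sub>R v)" using y span_finite[OF fin] by auto
  have "\<exists>v\<in>A. u v \<noteq> 0"
  proof (rule ccontr)
    assume "\<not> ?thesis" then have "y = 0" unfolding u by (auto intro: sum.neutral)
    then show False using ne by simp
  qed
  then obtain v where v: "v \<in> A" "u v \<noteq> 0" by blast
  have "(\<Sum>v\<in>A. (u v)^2 * B v v) > 0"
    by (rule sum_pos2[OF fin v(1)]) (use pos v in auto)
  then show ?thesis unfolding u diag_expand[OF bl fin d] .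
qed

lemma span_form_nonpos:
  fixes B :: "'v::euclidean_space \<Rightarrow> 'v \<Rightarrow> real"
  assumes bl: "bilinear B" and fin: "finite A" and d: "\<forall>v\<in>A. \<forall>w\<in>A. v \<noteq> w \<longrightarrow> B v w = 0"
    and y: "y \<in> span A" and np: "\<forall>v\<in>A. B v v \<le> 0"
  shows "B y y \<le> 0"
proof -
  obtain u where u: "y = (\<Sum>v\<in>A. u v *\<^sub>R v)" using y span_finite[OF fin] by auto
  have "(\<Sum>v\<in>A. (u v)^2 * B v v) \<le> 0"
    by (rule sum_nonpos) (use np in \<open>auto simp: mult_nonneg_nonpos\<close>)
  then show ?thesis unfolding u diag_expand[OF bl fin d] .
qed

lemma sylv_le:
  fixes B :: "'v::euclidean_space \<Rightarrow> 'v \<Rightarrow> real"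
  assumes bl: "bilinear B" and b: "diag_basis B W b" and b': "diag_basis B W b'"
  shows "card {x\<in>b. B x x > 0} \<le> card {x\<in>b'. B x x > 0}"
proof -
  define bp where "bp = {x\<in>b. B x x > 0}"
  define bq where "bq = {x\<in>b'. \<not> B x x > 0}"
  define bp' where "bp' = {x\<in>b'. B x x > 0}"
  have ib: "independent b" and ib': "independent b'" using b b' unfolding diag_basis_def by auto
  have fb: "finite b" "finite b'" using ib ib' finiteI_independent by auto
  have fbp: "finite bp" "finite bq" "finite bp'" using fb unfolding bp_def bq_def bp'_def by auto
  have W: "W = span b'" using b' unfolding diag_basis_def by auto
  have Wb: "W = span b" using b unfolding diag_basis_def by auto
  have db: "\<forall>v\<in>bp. \<forall>w\<in>bp. v \<noteq> w \<longrightarrow> B v w = 0" "\<forall>v\<in>bq. \<forall>w\<in>bq. v \<noteq> w \<longrightarrow> B v w = 0"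
    using b b' unfolding diag_basis_def bp_def bq_def by auto
  have int0: "span bp \<inter> span bq = {0}"
  proof (intro equalityI subsetI)
    fix y assume y: "y \<in> span bp \<inter> span bq"
    have "B y y \<le> 0" by (rule span_form_nonpos[OF bl fbp(2) db(2)]) (use y bq_def in auto)
    moreover have "y \<noteq> 0 \<Longrightarrow> B y y > 0" by (rule span_form_pos[OF bl fbp(1) db(1)]) (use y bp_def in auto)
    ultimately show "y \<in> {0}" by force
  qed (auto simp: span_zero)
  have dp: "dim (span bp) = card bp" by (rule dim_span_eq_card_independent) (rule independent_mono[OF ib], auto simp: bp_def)
  have dq: "dim (span bq) = card bq" by (rule dim_span_eq_card_independent) (rule independent_mono[OF ib'], auto simp: bq_def)
  have sub: "{x + y |x y. x \<in> span bp \<and> y \<in> span bq} \<subseteq> W"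
  proof -
    have "span bp \<subseteq> W" unfolding Wb by (rule span_mono) (auto simp: bp_def)
    moreover have "span bq \<subseteq> W" unfolding W by (rule span_mono) (auto simp: bq_def)
    ultimately show ?thesis using subspace_span[of b'] W by (auto intro: subspace_add)
  qed
  have "dim {x + y |x y. x \<in> span bp \<and> y \<in> span bq} + dim (span bp \<inter> span bq) = dim (span bp) + dim (span bq)"
    by (rule dim_sums_Int) auto
  then have "card bp + card bq \<le> dim W" using dim_subset[OF sub] int0 dp dq by (simp add: dim_insert)
  also have "dim W = card b'" unfolding W by (rule dim_span_eq_card_independent[OF ib'])
  also have "card b' = card bp' + card bq"
  proof -
    have "b' = bp' \<union> bq" "bp' \<inter> bq = {}" unfolding bp'_def bq_def by auto
    then show ?thesis using fbp card_Un_disjoint by metis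
  qed
  finally show ?thesis unfolding bp_def bp'_def by simp
qed

lemma diag_basis_cong:
  assumes a: "\<forall>x\<in>W. \<forall>y\<in>W. B' x y = B x y"
  shows "diag_basis B' W = diag_basis B W"
proof
  fix b
  show "diag_basis B' W b = diag_basis B W b"
    unfolding diag_basis_def
  proof (cases "b \<subseteq> W")
    case True then have "\<forall>x\<in>b. \<forall>y\<in>b. B' x y = B x y" using a by blast
    then show "(b \<subseteq> W \<and> independent b \<and> span b = W \<and> (\<forall>x\<in>b. \<forall>y\<in>b. x \<noteq> y \<longrightarrow> B' x y = 0)) =
    (b \<subseteq> W \<and> independent b \<and> span b = W \<and> (\<forall>x\<in>b. \<forall>y\<in>b. x \<noteq> y \<longrightarrow> B x y = 0))" by auto
  qed auto
qed

lemma diag_basis_neg: "diag_basis (\<lambda>x y. - B x y) W = diag_basis B W"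
  unfolding diag_basis_def by (auto intro!: ext)

lemma bilinear_neg: "bilinear B \<Longrightarrow> bilinear (\<lambda>x y. - (B x y :: real))"
  unfolding bilinear_def by (auto intro: linear_compose_neg)

lemma forms_count:
  fixes B B' :: "'v::euclidean_space \<Rightarrow> 'v \<Rightarrow> real"
  assumes bl: "bilinear B" and agree: "\<forall>x\<in>W. \<forall>y\<in>W. B' x y = B x y" and b0: "diag_basis B W b0"
  shows "coindex_form B' W = card {x\<in>b0. B x x > 0} \<and> index_form B' W = card {x\<in>b0. B x x < 0}"
proof -
  define b1 where "b1 = (SOME b. diag_basis B' W b)"
  have eq: "diag_basis B' W = diag_basis B W" by (rule diag_basis_cong[OF agree])
  have b1: "diag_basis B W b1" unfolding b1_def eq by (rule someI[of _ b0]) (rule b0)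
  have b1W: "b1 \<subseteq> W" using b1 unfolding diag_basis_def by auto
  have b0W: "b0 \<subseteq> W" using b0 unfolding diag_basis_def by auto
  have c1: "coindex_form B' W = card {x\<in>b1. B x x > 0}"
    unfolding coindex_form_def b1_def[symmetric] using b1W agree by (intro arg_cong[where f=card]) auto
  have i1: "index_form B' W = card {x\<in>b1. B x x < 0}"
    unfolding index_form_def b1_def[symmetric] using b1W agree by (intro arg_cong[where f=card]) auto
  have "card {x\<in>b1. B x x > 0} = card {x\<in>b0. B x x > 0}"
    using sylv_le[OF bl b1 b0] sylv_le[OF bl b0 b1] by simp
  moreover
  have nb: "bilinear (\<lambda>x y. - B x y)" by (rule bilinear_neg[OF bl])
  have b1n: "diag_basis (\<lambda>x y. - B x y) W b1" and b0n: "diag_basis (\<lambda>x y. - B x y) W b0"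
    using b1 b0 diag_basis_neg by metis+
  have "card {x\<in>b1. - B x x > 0} = card {x\<in>b0. - B x x > 0}"
    using sylv_le[OF nb b1n b0n] sylv_le[OF nb b0n b1n] by simp
  ultimately show ?thesis using c1 i1 by simp
qed



lemma sign_near:
  fixes D :: "nat \<Rightarrow> real \<Rightarrow> real"
  assumes der: "\<And>n t. t \<in> {a<..<b} \<Longrightarrow> DERIV (D n) t :> D (Suc n) t"
    and t0: "t0 \<in> {a<..<b}"
  shows "\<forall>m. (\<forall>j<p. D (m+j) t0 = 0) \<longrightarrow> D (m+p) t0 \<noteq> 0 \<longrightarrow>
     (\<exists>\<delta>>0. (\<forall>t. t0 < t \<and> t < t0 + \<delta> \<longrightarrow> D m t * D (m+p) t0 > 0) \<and>
            (\<forall>t. t0 - \<delta> < t \<and> t < t0 \<longrightarrow> (-1)^p * D m t * D (m+p) t0 > 0))"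
proof (induction p)
  case 0
  show ?case
  proof (intro allI impI)
    fix m assume "\<forall>j<0. D (m + j) t0 = 0" and nz: "D (m + 0) t0 \<noteq> 0"
    define c where "c = D m t0"
    have c: "c \<noteq> 0" using nz c_def by simp
    have "isCont (D m) t0" using der[OF t0] by (rule DERIV_isCont)
    then have "isCont (\<lambda>t. D m t * c) t0" by (intro continuous_intros)
    then have "(\<lambda>t. D m t * c) \<midarrow>t0\<rightarrow> c * c" unfolding isCont_def c_def by simp
    from LIM_D[OF this] obtain s where s: "s > 0" "\<And>x. x \<noteq> t0 \<and> norm (x - t0) < s \<Longrightarrow> norm (D m x * c - c * c) < c * c"
      using c by (metis not_real_square_gt_zero)
    have pos: "D m x * c > 0" if "x \<noteq> t0" "\<bar>x - t0\<bar> < s" for x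
      using s(2)[of x] that by (auto simp: abs_less_iff)
    show "\<exists>\<delta>>0. (\<forall>t. t0 < t \<and> t < t0 + \<delta> \<longrightarrow> D m t * D (m + 0) t0 > 0) \<and>
            (\<forall>t. t0 - \<delta> < t \<and> t < t0 \<longrightarrow> (-1)^0 * D m t * D (m + 0) t0 > 0)"
      by (rule exI[of _ s]) (use s pos in \<open>auto simp: c_def\<close>)
  qed
next
  case (Suc p)
  show ?case
  proof (intro allI impI)
    fix m assume z: "\<forall>j<Suc p. D (m + j) t0 = 0" and nz: "D (m + Suc p) t0 \<noteq> 0"
    define c where "c = D (m + Suc p) t0"
    have z0: "D m t0 = 0" using z by (metis add_0_right zero_less_Suc)
    have "(\<forall>j<p. D (Suc m + j) t0 = 0)" using z by auto
    moreover have "D (Suc m + p) t0 \<noteq> 0" using nz by simp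
    ultimately obtain \<delta> where d: "\<delta> > 0"
      "\<And>t. t0 < t \<and> t < t0 + \<delta> \<Longrightarrow> D (Suc m) t * c > 0"
      "\<And>t. t0 - \<delta> < t \<and> t < t0 \<Longrightarrow> (-1)^p * D (Suc m) t * c > 0"
      using Suc.IH c_def by (metis add_Suc add_Suc_right)
    define \<delta>' where "\<delta>' = min \<delta> (min (b - t0) (t0 - a))"
    have d': "\<delta>' > 0" using d t0 unfolding \<delta>'_def by auto
    have right: "D m t * c > 0" if t: "t0 < t" "t < t0 + \<delta>'" for t
    proof -
      have "\<And>x. t0 \<le> x \<Longrightarrow> x \<le> t \<Longrightarrow> DERIV (D m) x :> D (Suc m) x"
        by (rule der) (use t t0 \<delta>'_def in auto)
      from MVT2[OF t(1) this] obtain z where zz: "t0 < z" "z < t" "D m t - D m t0 = (t - t0) * D (Suc m) z" by blast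
      have "D (Suc m) z * c > 0" using d(2)[of z] zz t \<delta>'_def by auto
      then have "(t - t0) * (D (Suc m) z * c) > 0" using t by simp
      moreover have "D m t = (t - t0) * D (Suc m) z" using zz z0 by simp
      ultimately show ?thesis by (simp add: mult.assoc)
    qed
    have left: "(-1)^Suc p * D m t * c > 0" if t: "t0 - \<delta>' < t" "t < t0" for t
    proof -
      have "\<And>x. t \<le> x \<Longrightarrow> x \<le> t0 \<Longrightarrow> DERIV (D m) x :> D (Suc m) x"
        by (rule der) (use t t0 \<delta>'_def in auto)
      from MVT2[OF t(2) this] obtain z where zz: "t < z" "z < t0" "D m t0 - D m t = (t0 - t) * D (Suc m) z" by blast
      have "(-1)^p * D (Suc m) z * c > 0" using d(3)[of z] zz t \<delta>'_def by auto
      then have pos: "(t0 - t) * ((-1)^p * D (Suc m) z * c) > 0" using t by simp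
      have Dmt: "D m t = - ((t0 - t) * D (Suc m) z)" using zz z0 by simp
      have eq: "(-1)^Suc p * D m t * c = (t0 - t) * ((-1)^p * D (Suc m) z * c)"
        unfolding Dmt by (simp add: algebra_simps)
      show ?thesis using pos eq by linarith
    qed
    show "\<exists>\<delta>>0. (\<forall>t. t0 < t \<and> t < t0 + \<delta> \<longrightarrow> D m t * D (m + Suc p) t0 > 0) \<and>
            (\<forall>t. t0 - \<delta> < t \<and> t < t0 \<longrightarrow> (-1)^Suc p * D m t * D (m + Suc p) t0 > 0)"
      using d' right left c_def by blast
  qed
qed

lemma sign_const:
  fixes f :: "real \<Rightarrow> real"
  assumes "x \<le> y" "continuous_on {x..y} f" "\<forall>t\<in>{x..y}. f t \<noteq> 0" "f x * c > 0"
  shows "f y * c > 0"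
proof (rule ccontr)
  assume a: "\<not> f y * c > 0"
  have "f y \<noteq> 0" using assms(1,3) by auto
  then have "(f x > 0 \<and> f y < 0) \<or> (f x < 0 \<and> f y > 0)" using assms(4) a
    by (cases "c > 0") (auto simp: zero_less_mult_iff mult_less_0_iff)
  then obtain z where "x \<le> z" "z \<le> y" "f z = 0"
    using IVT'[of f x 0 y] IVT2'[of f y 0 x] assms(1,2) by force
  then show False using assms(3) by auto
qed

lemma deriv_seq_interior:
  fixes D :: "nat \<Rightarrow> real \<Rightarrow> real"
  assumes "deriv_seq {a..b} f D" "t \<in> {a<..<b}"
  shows "DERIV (D n) t :> D (Suc n) t"
proof -
  have "(D n has_vector_derivative D (Suc n) t) (at t within {a..b})" using assms unfolding deriv_seq_def by auto
  moreover have "at t within {a..b} = at t" using assms(2) by (intro at_within_interior) auto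
  ultimately show ?thesis by (simp add: has_real_derivative_iff_has_vector_derivative)
qed

lemma deriv_seq_cont:
  assumes "deriv_seq S f D"
  shows "continuous_on S f"
proof -
  have "continuous (at t within S) (D 0)" if "t \<in> S" for t
    using assms that unfolding deriv_seq_def by (metis has_vector_derivative_continuous)
  then have "continuous_on S (D 0)" by (simp add: continuous_on_eq_continuous_within)
  then show ?thesis by (rule continuous_on_eq) (use assms in \<open>auto simp: deriv_seq_def\<close>)
qed

lemma sign_ends:
  fixes f :: "real \<Rightarrow> real" and t0 \<epsilon> :: real
  assumes eps: "\<epsilon> > 0" and D: "deriv_seq {t0-\<epsilon>..t0+\<epsilon>} f D"
    and z: "\<forall>j<p. D j t0 = 0" and nz: "D p t0 \<noteq> 0"
    and nzf: "\<forall>t\<in>{t0-\<epsilon>..t0+\<epsilon>}. t \<noteq> t0 \<longrightarrow> f t \<noteq> 0"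
  shows "f (t0+\<epsilon>) * D p t0 > 0 \<and> (-1)^p * f (t0-\<epsilon>) * D p t0 > 0"
proof -
  have der: "\<And>n t. t \<in> {t0-\<epsilon><..<t0+\<epsilon>} \<Longrightarrow> DERIV (D n) t :> D (Suc n) t"
    using deriv_seq_interior[OF D] by auto
  have "t0 \<in> {t0-\<epsilon><..<t0+\<epsilon>}" using eps by auto
  from sign_near[where D=D and a="t0-\<epsilon>" and b="t0+\<epsilon>", OF der this, of p, rule_format, of 0] z nz obtain \<delta> where d: "\<delta> > 0"
    "\<And>t. t0 < t \<and> t < t0 + \<delta> \<Longrightarrow> D 0 t * D p t0 > 0"
    "\<And>t. t0 - \<delta> < t \<and> t < t0 \<Longrightarrow> (-1)^p * D 0 t * D p t0 > 0" by auto
  have D0: "D 0 t = f t" if "t \<in> {t0-\<epsilon>..t0+\<epsilon>}" for t using D that unfolding deriv_seq_def by auto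
  define h where "h = min \<delta> \<epsilon> / 2"
  have h: "0 < h" "h < \<delta>" "h < \<epsilon>" using d eps unfolding h_def by auto
  have cont: "continuous_on {t0-\<epsilon>..t0+\<epsilon>} f" by (rule deriv_seq_cont[OF D])
  have r0: "f (t0 + h) * D p t0 > 0" using d(2)[of "t0+h"] D0[of "t0+h"] h by auto
  have r: "f (t0+\<epsilon>) * D p t0 > 0"
    by (rule sign_const[where f=f and x="t0+h" and c="D p t0", OF _ _ _ r0]) (use h nzf in \<open>auto intro: continuous_on_subset[OF cont]\<close>)
  define g where "g = (\<lambda>t. f (-t))"
  have l0: "g (-(t0 - h)) * ((-1)^p * D p t0) > 0" using d(3)[of "t0-h"] D0[of "t0-h"] h by (auto simp: g_def algebra_simps)
  have contg: "continuous_on {-(t0-h)..-(t0-\<epsilon>)} g" unfolding g_def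
    by (rule continuous_on_compose2[OF cont]) (use h in \<open>auto intro!: continuous_intros\<close>)
  have l: "g (-(t0-\<epsilon>)) * ((-1)^p * D p t0) > 0"
    by (rule sign_const[where f=g and x="-(t0-h)" and c="(-1)^p * D p t0", OF _ contg _ l0]) (use h nzf in \<open>auto simp: g_def\<close>)
  show ?thesis using r l by (simp add: g_def algebra_simps)
qed



locale P29 =
  fixes L :: "real \<Rightarrow> ('v::euclidean_space \<Rightarrow>\<^sub>L 'v)"
    and lam :: "nat \<Rightarrow> real \<Rightarrow> real"
    and vv :: "nat \<Rightarrow> real \<Rightarrow> 'v"
    and t0 \<epsilon> :: real and S :: "real set"
  assumes S_def: "S = {t0 - \<epsilon> .. t0 + \<epsilon>}"
    and eps: "\<epsilon> > 0"
    and L_smooth: "smooth_on S L"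
    and L_sym: "\<forall>t\<in>S. \<forall>x y. inner (blinfun_apply (L t) x) y = inner x (blinfun_apply (L t) y)"
    and L_inv: "\<forall>t\<in>S. t \<noteq> t0 \<longrightarrow> bij (blinfun_apply (L t))"
    and lam_smooth: "\<forall>i<DIM('v). smooth_on S (lam i)"
    and finite_order: "\<forall>i<DIM('v). (\<not> (\<exists>c. \<forall>t\<in>S. lam i t = c)) \<longrightarrow> (\<exists>j. hderiv S (lam i) j t0 \<noteq> 0)"
    and vv_smooth: "\<forall>i<DIM('v). smooth_on S (vv i)"
    and vv_orth: "\<forall>t\<in>S. \<forall>i<DIM('v). \<forall>j<DIM('v). inner (vv i t) (vv j t) = (if i = j then 1 else 0)"
    and vv_eig: "\<forall>t\<in>S. \<forall>i<DIM('v). blinfun_apply (L t) (vv i t) = lam i t *\<^sub>R vv i t"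
begin

definition vvs :: "real \<Rightarrow> nat set \<Rightarrow> 'v set" where "vvs t I = (\<lambda>i. vv i t) ` I"

lemma t0S: "t0 \<in> S" using eps S_def by auto

lemma inj_vv: "t \<in> S \<Longrightarrow> inj_on (\<lambda>i. vv i t) {..<DIM('v)}"
proof (rule inj_onI)
  fix i j assume t: "t \<in> S" and ij: "i \<in> {..<DIM('v)}" "j \<in> {..<DIM('v)}" "vv i t = vv j t"
  have "inner (vv i t) (vv i t) = 1" using vv_orth t ij(1) by simp
  moreover have "i \<noteq> j \<Longrightarrow> inner (vv i t) (vv j t) = 0" using vv_orth t ij(1,2) by simp
  ultimately show "i = j" using ij(3) by force
qed

lemma vv_nz: "t \<in> S \<Longrightarrow> i < DIM('v) \<Longrightarrow> vv i t \<noteq> 0"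
proof -
  assume "t \<in> S" "i < DIM('v)"
  then have "inner (vv i t) (vv i t) = 1" using vv_orth by simp
  then show ?thesis by auto
qed

lemma indep_vv: "t \<in> S \<Longrightarrow> I \<subseteq> {..<DIM('v)} \<Longrightarrow> independent (vvs t I)"
proof -
  assume t: "t \<in> S" and I: "I \<subseteq> {..<DIM('v)}"
  have "pairwise orthogonal (vvs t I)" unfolding pairwise_def vvs_def orthogonal_def
  proof (clarify)
    fix i j assume ij: "i \<in> I" "j \<in> I" "vv i t \<noteq> vv j t"
    then have "i \<noteq> j" "i < DIM('v)" "j < DIM('v)" using I by auto
    then show "inner (vv i t) (vv j t) = 0" using vv_orth t by simp
  qed
  moreover have "0 \<notin> vvs t I" unfolding vvs_def using vv_nz[OF t] I by force
  ultimately show ?thesis by (rule pairwise_orthogonal_independent)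
qed

lemma span_vv: "t \<in> S \<Longrightarrow> span (vvs t {..<DIM('v)}) = UNIV"
proof -
  assume t: "t \<in> S"
  have c: "card (vvs t {..<DIM('v)}) = DIM('v)" unfolding vvs_def using card_image[OF inj_vv[OF t]] by simp
  have "UNIV \<subseteq> span (vvs t {..<DIM('v)})"
    using card_eq_dim[of "vvs t {..<DIM('v)}" UNIV] c indep_vv[OF t] by (simp add: vvs_def)
  then show ?thesis by auto
qed

lemma inner_vv_sum: "t \<in> S \<Longrightarrow> I \<subseteq> {..<DIM('v)} \<Longrightarrow> j < DIM('v) \<Longrightarrow>
   inner (\<Sum>i\<in>I. c i *\<^sub>R vv i t) (vv j t) = (if j \<in> I then c j else 0)"
proof -
  assume t: "t \<in> S" and I: "I \<subseteq> {..<DIM('v)}" and j: "j < DIM('v)"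
  have fI: "finite I" using I finite_subset by blast
  have "inner (\<Sum>i\<in>I. c i *\<^sub>R vv i t) (vv j t) = (\<Sum>i\<in>I. if i = j then c i else 0)"
    unfolding inner_sum_left by (rule sum.cong) (use vv_orth t I j in auto)
  also have "\<dots> = (if j \<in> I then c j else 0)" using fI by (simp add: sum.delta)
  finally show ?thesis .
qed

lemma orth_span: "t \<in> S \<Longrightarrow> I \<subseteq> {..<DIM('v)} \<Longrightarrow> x \<in> span (vvs t I) \<Longrightarrow> j < DIM('v) \<Longrightarrow> j \<notin> I \<Longrightarrow> inner x (vv j t) = 0"
proof -
  assume t: "t \<in> S" and I: "I \<subseteq> {..<DIM('v)}" and x: "x \<in> span (vvs t I)" and j: "j < DIM('v)" "j \<notin> I"
  have "orthogonal (vv j t) x"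
    by (rule orthogonal_to_span[OF x]) (use vv_orth t I j in \<open>auto simp: vvs_def orthogonal_def\<close>)
  then show ?thesis by (simp add: orthogonal_def inner_commute)
qed

lemma expand_full: "t \<in> S \<Longrightarrow> x = (\<Sum>i<DIM('v). inner x (vv i t) *\<^sub>R vv i t)"
proof -
  assume t: "t \<in> S"
  define y where "y = x - (\<Sum>i<DIM('v). inner x (vv i t) *\<^sub>R vv i t)"
  have "inner y (vv j t) = 0" if j: "j < DIM('v)" for j
    unfolding y_def inner_diff_left using inner_vv_sum[OF t _ j, of "{..<DIM('v)}"] j by simp
  then have "inner y z = 0" if "z \<in> span (vvs t {..<DIM('v)})" for z
    using orthogonal_to_span[OF that, of y] by (auto simp: vvs_def orthogonal_def)
  then have "inner y y = 0" using span_vv[OF t] by auto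
  then show ?thesis unfolding y_def by simp
qed

lemma expand_sub: "t \<in> S \<Longrightarrow> I \<subseteq> {..<DIM('v)} \<Longrightarrow> x \<in> span (vvs t I) \<Longrightarrow> x = (\<Sum>i\<in>I. inner x (vv i t) *\<^sub>R vv i t)"
proof -
  assume t: "t \<in> S" and I: "I \<subseteq> {..<DIM('v)}" and x: "x \<in> span (vvs t I)"
  have "x = (\<Sum>i<DIM('v). inner x (vv i t) *\<^sub>R vv i t)" by (rule expand_full[OF t])
  also have "\<dots> = (\<Sum>i\<in>I. inner x (vv i t) *\<^sub>R vv i t)"
    by (rule sum.mono_neutral_right) (use I orth_span[OF t I x] in auto)
  finally show ?thesis .
qed

lemma in_span_sub: "I \<subseteq> {..<DIM('v)} \<Longrightarrow> (\<Sum>i\<in>I. c i *\<^sub>R vv i t) \<in> span (vvs t I)"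
  unfolding vvs_def by (intro span_sum span_scale span_base) auto

lemma L_inner_vv: "t \<in> S \<Longrightarrow> j < DIM('v) \<Longrightarrow> inner (blinfun_apply (L t) x) (vv j t) = lam j t * inner x (vv j t)"
  using L_sym vv_eig by simp

lemma lam_nz: "t \<in> S \<Longrightarrow> t \<noteq> t0 \<Longrightarrow> i < DIM('v) \<Longrightarrow> lam i t \<noteq> 0"
proof
  assume t: "t \<in> S" "t \<noteq> t0" and i: "i < DIM('v)" and z: "lam i t = 0"
  have "blinfun_apply (L t) (vv i t) = blinfun_apply (L t) 0" using vv_eig t i z by simp
  then have "vv i t = 0" using L_inv t by (metis bij_def injD)
  then show False using vv_nz t i by simp
qed

end



context P29 begin

definition Ik :: "nat \<Rightarrow> nat set" where
  "Ik k = {i. i < DIM('v) \<and> (\<forall>j<k. hderiv S (lam i) j t0 = 0)}"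

lemma Ik_sub: "Ik k \<subseteq> {..<DIM('v)}" unfolding Ik_def by auto

lemma hd_seq: "smooth_on S f \<Longrightarrow> deriv_seq S f (hderiv S f)"
  unfolding smooth_on_def hderiv_def by (rule someI_ex[of "deriv_seq S f"])

lemma dL: "deriv_seq S L (hderiv S L)" using hd_seq L_smooth by blast
lemma dlam: "i < DIM('v) \<Longrightarrow> deriv_seq S (lam i) (hderiv S (lam i))" using hd_seq lam_smooth by blast
lemma dvv: "i < DIM('v) \<Longrightarrow> deriv_seq S (vv i) (hderiv S (vv i))" using hd_seq vv_smooth by blast

lemma ds0: "deriv_seq T f D \<Longrightarrow> t \<in> T \<Longrightarrow> D 0 t = f t" unfolding deriv_seq_def by auto

lemma Sab: "t0 - \<epsilon> < t0 + \<epsilon>" using eps by simp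

lemma nbhd_interval:
  assumes "T \<in> nbhds_in S t0"
  obtains d where "d > 0" "T = {t0 - d .. t0 + d}" "T \<subseteq> S"
proof -
  obtain \<delta> where d: "\<delta> > 0" "T = S \<inter> cball t0 \<delta>" using assms unfolding nbhds_in_def by auto
  define d where "d = min \<delta> \<epsilon>"
  have "T = {t0 - d .. t0 + d}" unfolding d(2) S_def d_def cball_eq_atLeastAtMost by auto
  moreover have "d > 0" using d eps d_def by auto
  moreover have "T \<subseteq> S" using d by auto
  ultimately show ?thesis using that by blast
qed

lemma root_facts:
  assumes ru: "is_root_fun L S t0 T u" and ord: "root_ord_ge L t0 T u k" and i: "i < DIM('v)"
  shows "(\<forall>p<k. (\<forall>j<p. hderiv S (lam i) j t0 = 0) \<longrightarrow> hderiv S (lam i) p t0 * inner (u t0) (vv i t0) = 0)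
    \<and> ((\<forall>j<k. hderiv S (lam i) j t0 = 0) \<longrightarrow>
        inner (hderiv T (\<lambda>t. blinfun_apply (L t) (u t)) k t0) (vv i t0) = hderiv S (lam i) k t0 * inner (u t0) (vv i t0))"
proof -
  have Tn: "T \<in> nbhds_in S t0" and su: "smooth_on T u" using ru unfolding is_root_fun_def by auto
  obtain d where d: "d > 0" "T = {t0 - d .. t0 + d}" "T \<subseteq> S" using nbhd_interval[OF Tn] by blast
  have t0T: "t0 \<in> T" using d by auto
  obtain Du where Du: "deriv_seq T u Du" using su unfolding smooth_on_def by blast
  define F where "F = (\<lambda>t. blinfun_apply (L t) (u t))"
  define DF where "DF = leib blinfun_apply (hderiv S L) Du"
  have dF: "deriv_seq T F DF" unfolding F_def DF_def
    by (rule leib_deriv[OF bounded_bilinear_blinfun_apply deriv_seq_subset[OF dL d(3)] Du])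
  have hF: "hderiv T F j t0 = DF j t0" for j
    unfolding d(2) by (rule hderiv_eq) (use d dF in auto)
  have DFz: "\<forall>j<k. DF j t0 = 0" using ord hF unfolding root_ord_ge_def F_def by auto
  define DG where "DG = leib inner DF (hderiv S (vv i))"
  have dG: "deriv_seq T (\<lambda>t. inner (F t) (vv i t)) DG" unfolding DG_def
    by (rule leib_deriv[OF bounded_bilinear_inner dF deriv_seq_subset[OF dvv[OF i] d(3)]])
  have DGv: "(\<forall>j<k. DG j t0 = 0) \<and> DG k t0 = inner (DF k t0) (vv i t0)"
    using leib_vanish[OF bounded_bilinear_inner, of k DF t0 "hderiv S (vv i)", OF DFz] ds0[OF dvv[OF i] t0S] unfolding DG_def by simp
  define DA where "DA = leib inner Du (hderiv S (vv i))"
  have dA: "deriv_seq T (\<lambda>t. inner (u t) (vv i t)) DA" unfolding DA_def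
    by (rule leib_deriv[OF bounded_bilinear_inner Du deriv_seq_subset[OF dvv[OF i] d(3)]])
  have DA0: "DA 0 t0 = inner (u t0) (vv i t0)" using ds0[OF dA t0T] .
  define DH where "DH = leib (*) (hderiv S (lam i)) DA"
  have dH: "deriv_seq T (\<lambda>t. lam i t * inner (u t) (vv i t)) DH" unfolding DH_def
    by (rule leib_deriv[OF bounded_bilinear_mult deriv_seq_subset[OF dlam[OF i] d(3)] dA])
  have dH': "deriv_seq T (\<lambda>t. inner (F t) (vv i t)) DH"
    by (rule deriv_seq_cong[OF dH]) (use d(3) L_inner_vv i F_def in auto)
  have GH: "DG j t0 = DH j t0" for j
    using deriv_seq_unique[of "t0-d" "t0+d" _ DG DH j] dG dH' d t0T by auto
  have DHv: "(\<forall>j<m. hderiv S (lam i) j t0 = 0) \<Longrightarrow> DH m t0 = hderiv S (lam i) m t0 * inner (u t0) (vv i t0)" for m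
    using leib_vanish[OF bounded_bilinear_mult, of m "hderiv S (lam i)" t0 DA] DA0 unfolding DH_def by simp
  show ?thesis
  proof (intro conjI allI impI)
    fix p assume "p < k" "\<forall>j<p. hderiv S (lam i) j t0 = 0"
    then show "hderiv S (lam i) p t0 * inner (u t0) (vv i t0) = 0" using DHv[of p] GH[of p] DGv by auto
  next
    assume "\<forall>j<k. hderiv S (lam i) j t0 = 0"
    then show "inner (hderiv T (\<lambda>t. blinfun_apply (L t) (u t)) k t0) (vv i t0) = hderiv S (lam i) k t0 * inner (u t0) (vv i t0)"
      using DHv[of k] GH[of k] DGv hF[of k] unfolding F_def by auto
  qed
qed

lemma W_sub: "W_space L S t0 k \<subseteq> span (vvs t0 (Ik k))"
proof
  fix x assume "x \<in> W_space L S t0 k"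
  then obtain u T where ru: "is_root_fun L S t0 T u" and ord: "root_ord_ge L t0 T u k" and x: "x = u t0"
    unfolding W_space_def by auto
  have z: "inner x (vv i t0) = 0" if i: "i < DIM('v)" "i \<notin> Ik k" for i
  proof -
    obtain j where j: "j < k" "hderiv S (lam i) j t0 \<noteq> 0" using i unfolding Ik_def by auto
    define p where "p = (LEAST j. hderiv S (lam i) j t0 \<noteq> 0)"
    have pj: "p \<le> j" unfolding p_def by (rule Least_le) (use j in auto)
    have pnz: "hderiv S (lam i) p t0 \<noteq> 0" unfolding p_def by (rule LeastI) (use j in auto)
    have pz: "\<forall>j'<p. hderiv S (lam i) j' t0 = 0" unfolding p_def using not_less_Least by blast
    have "hderiv S (lam i) p t0 * inner (u t0) (vv i t0) = 0"
      using root_facts[OF ru ord i(1)] pj j pz by auto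
    then show ?thesis using pnz x by simp
  qed
  have "x = (\<Sum>i<DIM('v). inner x (vv i t0) *\<^sub>R vv i t0)" by (rule expand_full[OF t0S])
  also have "\<dots> = (\<Sum>i\<in>Ik k. inner x (vv i t0) *\<^sub>R vv i t0)"
    by (rule sum.mono_neutral_right) (use z Ik_sub in auto)
  finally show "x \<in> span (vvs t0 (Ik k))" using in_span_sub[OF Ik_sub] by metis
qed

lemma S_nbhd: "S \<in> nbhds_in S t0"
  unfolding nbhds_in_def by (rule CollectI, rule exI[of _ \<epsilon>]) (use eps in \<open>auto simp: S_def cball_eq_atLeastAtMost\<close>)

lemma W_sup: assumes k: "k \<ge> 1" shows "span (vvs t0 (Ik k)) \<subseteq> W_space L S t0 k"
proof
  fix x assume x: "x \<in> span (vvs t0 (Ik k))"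
  define c where "c i = inner x (vv i t0)" for i
  define u where "u t = (\<Sum>i\<in>Ik k. c i *\<^sub>R vv i t)" for t
  have xu: "x = u t0" unfolding u_def c_def by (rule expand_sub[OF t0S Ik_sub x])
  have fI: "finite (Ik k)" using Ik_sub finite_subset by blast
  have su: "smooth_on S u" unfolding smooth_on_def u_def
    by (rule exI, rule deriv_seq_sum, rule deriv_seq_scale, rule dvv) (auto simp: Ik_def)
  have lz: "lam i t0 = 0" if "i \<in> Ik k" for i
  proof -
    have "hderiv S (lam i) 0 t0 = 0" using that k unfolding Ik_def by auto
    then show ?thesis using ds0[OF dlam t0S] that unfolding Ik_def by auto
  qed
  have Lu: "blinfun_apply (L t) (u t) = (\<Sum>i\<in>Ik k. c i *\<^sub>R (lam i t *\<^sub>R vv i t))" if t: "t \<in> S" for t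
    unfolding u_def using vv_eig t by (simp add: blinfun.sum_right blinfun.scaleR_right Ik_def)
  have r0: "blinfun_apply (L t0) (u t0) = 0" using Lu[OF t0S] lz by simp
  define DF where "DF n t = (\<Sum>i\<in>Ik k. c i *\<^sub>R leib scaleR (hderiv S (lam i)) (hderiv S (vv i)) n t)" for n t
  have dF: "deriv_seq S (\<lambda>t. blinfun_apply (L t) (u t)) DF"
  proof (rule deriv_seq_cong[OF _ Lu[symmetric]])
    show "deriv_seq S (\<lambda>t. \<Sum>i\<in>Ik k. c i *\<^sub>R (lam i t *\<^sub>R vv i t)) DF" unfolding DF_def
      by (rule deriv_seq_sum, rule deriv_seq_scale, rule leib_deriv[OF bounded_bilinear_scaleR])
         (auto simp: Ik_def intro: dlam dvv)
  qed
  have "hderiv S (\<lambda>t. blinfun_apply (L t) (u t)) j t0 = 0" if j: "j < k" for j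
  proof -
    have "hderiv S (\<lambda>t. blinfun_apply (L t) (u t)) j t0 = DF j t0"
      unfolding S_def by (rule hderiv_eq[OF Sab]) (use dF t0S in \<open>auto simp: S_def\<close>)
    also have "\<dots> = 0" unfolding DF_def
    proof (rule sum.neutral, rule ballI)
      fix i assume i: "i \<in> Ik k"
      have "\<forall>j<k. hderiv S (lam i) j t0 = 0" using i unfolding Ik_def by auto
      then show "c i *\<^sub>R leib (*\<^sub>R) (hderiv S (lam i)) (hderiv S (vv i)) j t0 = 0"
        using leib_vanish[OF bounded_bilinear_scaleR, of k "hderiv S (lam i)" t0 "hderiv S (vv i)"] j by auto
    qed
    finally show ?thesis .
  qed
  then have "is_root_fun L S t0 S u \<and> root_ord_ge L t0 S u k"
    unfolding is_root_fun_def root_ord_ge_def using S_nbhd su r0 by auto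
  then show "x \<in> W_space L S t0 k" unfolding W_space_def using xu by blast
qed

lemma W_eq: "k \<ge> 1 \<Longrightarrow> W_space L S t0 k = span (vvs t0 (Ik k))"
  using W_sub W_sup by blast

end



context P29 begin

definition Bexp :: "nat \<Rightarrow> 'v \<Rightarrow> 'v \<Rightarrow> real" where
  "Bexp k x w = (\<Sum>i\<in>Ik k. (inner x (vv i t0) * (hderiv S (lam i) k t0 / fact k)) * inner (vv i t0) w)"

lemma B_eq:
  assumes k: "k \<ge> 1" and x: "x \<in> W_space L S t0 k" and w: "w \<in> W_space L S t0 k"
  shows "B_form L S t0 k x w = Bexp k x w"
proof -
  define P where "P r \<longleftrightarrow> (\<exists>u T. is_root_fun L S t0 T u \<and> root_ord_ge L t0 T u k \<and> u t0 = x \<and>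
      r = inner (hderiv T (\<lambda>t. blinfun_apply (L t) (u t)) k t0) w / fact k)" for r
  have all: "r = Bexp k x w" if Pr: "P r" for r
  proof -
    obtain u T where ru: "is_root_fun L S t0 T u" and ord: "root_ord_ge L t0 T u k" and ux: "u t0 = x"
      and r: "r = inner (hderiv T (\<lambda>t. blinfun_apply (L t) (u t)) k t0) w / fact k"
      using Pr unfolding P_def by blast
    define Fk where "Fk = hderiv T (\<lambda>t. blinfun_apply (L t) (u t)) k t0"
    have wsp: "w \<in> span (vvs t0 (Ik k))" using W_sub w by blast
    have we: "w = (\<Sum>i\<in>Ik k. inner w (vv i t0) *\<^sub>R vv i t0)" by (rule expand_sub[OF t0S Ik_sub wsp])
    have "inner Fk w = (\<Sum>i\<in>Ik k. inner w (vv i t0) * inner Fk (vv i t0))"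
      by (subst we) (simp add: inner_sum_right)
    also have "\<dots> = (\<Sum>i\<in>Ik k. inner w (vv i t0) * (hderiv S (lam i) k t0 * inner x (vv i t0)))"
    proof (rule sum.cong[OF refl])
      fix i assume i: "i \<in> Ik k"
      then have "i < DIM('v)" "\<forall>j<k. hderiv S (lam i) j t0 = 0" unfolding Ik_def by auto
      then show "inner w (vv i t0) * inner Fk (vv i t0) = inner w (vv i t0) * (hderiv S (lam i) k t0 * inner x (vv i t0))"
        using root_facts[OF ru ord] ux unfolding Fk_def by auto
    qed
    finally have "r = (\<Sum>i\<in>Ik k. inner w (vv i t0) * (hderiv S (lam i) k t0 * inner x (vv i t0))) / fact k"
      using r Fk_def by simp
    also have "\<dots> = Bexp k x w" unfolding Bexp_def sum_divide_distrib
      by (rule sum.cong) (auto simp: inner_commute)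
    finally show ?thesis .
  qed
  obtain u T where "is_root_fun L S t0 T u \<and> root_ord_ge L t0 T u k \<and> u t0 = x"
    using x unfolding W_space_def by auto
  then have "\<exists>r. P r" unfolding P_def by blast
  then have "P (SOME r. P r)" by (rule someI_ex)
  then have "(SOME r. P r) = Bexp k x w" by (rule all)
  then show ?thesis unfolding B_form_def P_def by simp
qed

lemma Bexp_vv: "a < DIM('v) \<Longrightarrow> b < DIM('v) \<Longrightarrow>
   Bexp k (c *\<^sub>R vv a t0) (vv b t0) = (if a = b \<and> a \<in> Ik k then c * hderiv S (lam a) k t0 / fact k else 0)"
proof -
  assume a: "a < DIM('v)" and b: "b < DIM('v)"
  have "Bexp k (c *\<^sub>R vv a t0) (vv b t0) = (\<Sum>i\<in>Ik k. if i = a \<and> i = b then c * hderiv S (lam i) k t0 / fact k else 0)"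
    unfolding Bexp_def by (rule sum.cong) (use a b t0S vv_orth in \<open>auto simp: Ik_def\<close>)
  also have "\<dots> = (if a = b \<and> a \<in> Ik k then c * hderiv S (lam a) k t0 / fact k else 0)"
  proof (cases "a = b")
    case True
    have fI: "finite (Ik k)" using Ik_sub finite_subset by blast
    show ?thesis using True fI by (simp add: sum.delta')
  qed (auto intro: sum.neutral)
  finally show ?thesis .
qed

lemma Bexp_bil: "bilinear (Bexp k)"
  unfolding bilinear_def
proof (intro conjI allI)
  fix x show "linear (Bexp k x)"
    by (rule linearI) (simp_all add: Bexp_def inner_add_right sum.distrib algebra_simps sum_distrib_left add_divide_distrib)
next
  fix y show "linear (\<lambda>x. Bexp k x y)"
    by (rule linearI) (simp_all add: Bexp_def inner_add_left sum.distrib algebra_simps sum_distrib_left add_divide_distrib)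
qed

lemma part2:
  assumes k: "k \<ge> 1" and i: "i < DIM('v)" and z: "\<forall>j<k. hderiv S (lam i) j t0 = 0" and w: "w \<in> W_space L S t0 k"
  shows "B_form L S t0 k (c *\<^sub>R vv i t0) w = hderiv S (lam i) k t0 / fact k * inner (c *\<^sub>R vv i t0) w"
proof -
  have iI: "i \<in> Ik k" using i z unfolding Ik_def by auto
  have "c *\<^sub>R vv i t0 \<in> span (vvs t0 (Ik k))" unfolding vvs_def by (intro span_scale span_base) (use iI in auto)
  then have cW: "c *\<^sub>R vv i t0 \<in> W_space L S t0 k" using W_eq[OF k] by simp
  have wsp: "w \<in> span (vvs t0 (Ik k))" using W_sub w by blast
  have we: "w = (\<Sum>j\<in>Ik k. inner w (vv j t0) *\<^sub>R vv j t0)" by (rule expand_sub[OF t0S Ik_sub wsp])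
  have "B_form L S t0 k (c *\<^sub>R vv i t0) w = Bexp k (c *\<^sub>R vv i t0) w" by (rule B_eq[OF k cW w])
  also have "\<dots> = (\<Sum>j\<in>Ik k. (inner (c *\<^sub>R vv i t0) (vv j t0) * (hderiv S (lam j) k t0 / fact k)) * inner (vv j t0) w)"
    unfolding Bexp_def ..
  also have "\<dots> = (\<Sum>j\<in>Ik k. if j = i then (c * (hderiv S (lam i) k t0 / fact k)) * inner (vv i t0) w else 0)"
    by (rule sum.cong) (use i t0S vv_orth in \<open>auto simp: Ik_def\<close>)
  also have "\<dots> = (c * (hderiv S (lam i) k t0 / fact k)) * inner (vv i t0) w"
    using iI Ik_sub finite_subset[OF Ik_sub] by (simp add: sum.delta')
  finally show ?thesis by simp
qed

lemma partial_counts: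
  assumes k: "k \<ge> 1"
  shows "partial_coindex L S t0 k = card {i\<in>Ik k. hderiv S (lam i) k t0 > 0}
       \<and> partial_index L S t0 k = card {i\<in>Ik k. hderiv S (lam i) k t0 < 0}"
proof -
  define b0 where "b0 = vvs t0 (Ik k)"
  have W: "W_space L S t0 k = span b0" using W_eq[OF k] b0_def by simp
  have db: "diag_basis (Bexp k) (span b0) b0"
    unfolding diag_basis_def
  proof (intro conjI)
    show "b0 \<subseteq> span b0" by (rule span_superset)
    show "independent b0" unfolding b0_def by (rule indep_vv[OF t0S Ik_sub])
    show "\<forall>x\<in>b0. \<forall>y\<in>b0. x \<noteq> y \<longrightarrow> Bexp k x y = 0"
    proof (intro ballI impI)
      fix x y assume "x \<in> b0" "y \<in> b0" "x \<noteq> y"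
      then obtain a b where ab: "a \<in> Ik k" "b \<in> Ik k" "x = vv a t0" "y = vv b t0" "a \<noteq> b"
        unfolding b0_def vvs_def by auto
      then show "Bexp k x y = 0" using Bexp_vv[of a b k 1] Ik_sub by auto
    qed
  qed simp
  have agree: "\<forall>x\<in>span b0. \<forall>y\<in>span b0. B_form L S t0 k x y = Bexp k x y"
    using B_eq[OF k] W by auto
  have fc: "coindex_form (B_form L S t0 k) (span b0) = card {x\<in>b0. Bexp k x x > 0}
       \<and> index_form (B_form L S t0 k) (span b0) = card {x\<in>b0. Bexp k x x < 0}"
    by (rule forms_count[OF Bexp_bil agree db])
  have diag: "Bexp k (vv a t0) (vv a t0) = hderiv S (lam a) k t0 / fact k" if "a \<in> Ik k" for a
    using Bexp_vv[of a a k 1] that Ik_sub by auto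
  have img: "{x\<in>b0. Q (Bexp k x x)} = (\<lambda>i. vv i t0) ` {i\<in>Ik k. Q (hderiv S (lam i) k t0 / fact k)}" for Q
    unfolding b0_def vvs_def using diag by auto
  have inj: "inj_on (\<lambda>i. vv i t0) (Ik k)" using inj_vv[OF t0S] Ik_sub inj_on_subset by blast
  have c1: "card {x\<in>b0. Bexp k x x > 0} = card {i\<in>Ik k. hderiv S (lam i) k t0 > 0}"
    unfolding img[of "\<lambda>r. r > 0"] by (subst card_image) (auto intro: inj_on_subset[OF inj] simp: zero_less_divide_iff)
  have c2: "card {x\<in>b0. Bexp k x x < 0} = card {i\<in>Ik k. hderiv S (lam i) k t0 < 0}"
    unfolding img[of "\<lambda>r. r < 0"] by (subst card_image) (auto intro: inj_on_subset[OF inj] simp: divide_less_0_iff)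
  show ?thesis using fc c1 c2 W unfolding partial_coindex_def partial_index_def by simp
qed

end



lemma card_sum_int: fixes D :: nat shows "int (card {i. i < D \<and> P i}) = (\<Sum>i<D. if P i then 1 else 0)"
proof -
  have "card {i. i < D \<and> P i} = card {i\<in>{..<D}. P i}" by (simp add: lessThan_def)
  also have "\<dots> = (\<Sum>i\<in>{i\<in>{..<D}. P i}. 1)" by simp
  also have "\<dots> = (\<Sum>i<D. if P i then 1 else 0)" by (rule sum.inter_filter) simp
  finally show ?thesis by (auto simp: of_nat_sum intro!: sum.cong)
qed

lemma ind_delta: fixes p N :: nat shows "(\<Sum>k=1..N. (if p = k \<and> Q then 1 else 0 :: int)) = (if 1 \<le> p \<and> p \<le> N \<and> Q then 1 else 0)"
proof -
  have "(\<Sum>k=1..N. (if p = k \<and> Q then 1 else 0 :: int)) = (\<Sum>k=1..N. (if k = p then (if Q then 1 else 0) else 0 :: int))"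
    by (rule sum.cong) auto
  also have "\<dots> = (if p \<in> {1..N} then (if Q then 1 else 0) else 0)" by (rule sum.delta[OF finite_atLeastAtMost])
  also have "\<dots> = (if 1 \<le> p \<and> p \<le> N \<and> Q then 1 else 0)" by auto
  finally show ?thesis .
qed

lemma ind_odd: fixes p N :: nat shows "p \<le> N \<Longrightarrow> (\<Sum>k=1..N. (if p = 2*k - 1 \<and> Q then 1 else 0 :: int)) = (if odd p \<and> Q then 1 else 0)"
proof -
  assume pN: "p \<le> N"
  have "(\<Sum>k=1..N. (if p = 2*k - 1 \<and> Q then 1 else 0 :: int)) = (\<Sum>k=1..N. (if k = (p+1) div 2 then (if odd p \<and> Q then 1 else 0) else 0 :: int))"
  proof (rule sum.cong[OF refl])
    fix k assume "k \<in> {1..N}"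
    then have "(p = 2*k - 1) = (odd p \<and> k = (p+1) div 2)" by auto
    then show "(if p = 2*k - 1 \<and> Q then 1 else 0 :: int) = (if k = (p+1) div 2 then (if odd p \<and> Q then 1 else 0) else 0)"
      by auto
  qed
  also have "\<dots> = (if (p+1) div 2 \<in> {1..N} then (if odd p \<and> Q then 1 else 0) else 0)" by (rule sum.delta[OF finite_atLeastAtMost])
  also have "\<dots> = (if odd p \<and> Q then 1 else 0)" using pN by auto presburger
  finally show ?thesis .
qed

lemma ind_even: fixes p N :: nat shows "p \<le> N \<Longrightarrow> (\<Sum>k=1..N. (if p = 2*k \<and> Q then 1 else 0 :: int)) = (if even p \<and> p \<noteq> 0 \<and> Q then 1 else 0)"
proof -
  assume pN: "p \<le> N"
  have "(\<Sum>k=1..N. (if p = 2*k \<and> Q then 1 else 0 :: int)) = (\<Sum>k=1..N. (if k = p div 2 then (if even p \<and> Q then 1 else 0) else 0 :: int))"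
  proof (rule sum.cong[OF refl])
    fix k assume "k \<in> {1..N}"
    then have "(p = 2*k) = (even p \<and> k = p div 2)" by auto
    then show "(if p = 2*k \<and> Q then 1 else 0 :: int) = (if k = p div 2 then (if even p \<and> Q then 1 else 0) else 0)"
      by auto
  qed
  also have "\<dots> = (if p div 2 \<in> {1..N} then (if even p \<and> Q then 1 else 0) else 0)" by (rule sum.delta[OF finite_atLeastAtMost])
  also have "\<dots> = (if even p \<and> p \<noteq> 0 \<and> Q then 1 else 0)" using pN by auto
  finally show ?thesis .
qed

context P29 begin

lemma op_bil: "bilinear (op_form T)"
  unfolding bilinear_def op_form_def
  by (auto intro!: linearI simp: inner_add_left inner_add_right blinfun.add_right blinfun.scaleR_right)

lemma coindex_L: assumes t: "t \<in> S" shows "coindex_op (L t) = card {i. i < DIM('v) \<and> lam i t > 0}"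
proof -
  define b0 where "b0 = vvs t {..<DIM('v)}"
  have ofv: "op_form (L t) (vv a t) (vv b t) = (if a = b then lam a t else 0)" if ab: "a < DIM('v)" "b < DIM('v)" for a b
  proof -
    have "blinfun_apply (L t) (vv a t) = lam a t *\<^sub>R vv a t" using vv_eig t ab by simp
    then have "op_form (L t) (vv a t) (vv b t) = lam a t * inner (vv a t) (vv b t)" by (simp add: op_form_def)
    also have "inner (vv a t) (vv b t) = (if a = b then 1 else 0)" using vv_orth t ab by simp
    finally show ?thesis by simp
  qed
  have db: "diag_basis (op_form (L t)) UNIV b0"
    unfolding diag_basis_def
  proof (intro conjI)
    show "independent b0" unfolding b0_def by (rule indep_vv[OF t]) simp
    show "span b0 = UNIV" unfolding b0_def by (rule span_vv[OF t])
    show "\<forall>x\<in>b0. \<forall>y\<in>b0. x \<noteq> y \<longrightarrow> op_form (L t) x y = 0"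
    proof (intro ballI impI)
      fix x y assume "x \<in> b0" "y \<in> b0" "x \<noteq> y"
      then obtain a b where "a < DIM('v)" "b < DIM('v)" "x = vv a t" "y = vv b t" "a \<noteq> b"
        unfolding b0_def vvs_def by auto
      then show "op_form (L t) x y = 0" using ofv[of a b] by simp
    qed
  qed simp
  have ag: "\<forall>x\<in>UNIV. \<forall>y\<in>UNIV. op_form (L t) x y = op_form (L t) x y" by simp
  have "coindex_form (op_form (L t)) UNIV = card {x\<in>b0. op_form (L t) x x > 0}"
    using forms_count[OF op_bil ag db] by simp
  also have "{x\<in>b0. op_form (L t) x x > 0} = (\<lambda>i. vv i t) ` {i. i < DIM('v) \<and> lam i t > 0}"
  proof (intro equalityI subsetI)
    fix x assume "x \<in> {x\<in>b0. op_form (L t) x x > 0}"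
    then obtain i where i: "i < DIM('v)" "x = vv i t" "op_form (L t) x x > 0" unfolding b0_def vvs_def by auto
    then have "lam i t > 0" using ofv[of i i] by simp
    then show "x \<in> (\<lambda>i. vv i t) ` {i. i < DIM('v) \<and> lam i t > 0}" using i by auto
  next
    fix x assume "x \<in> (\<lambda>i. vv i t) ` {i. i < DIM('v) \<and> lam i t > 0}"
    then obtain i where i: "i < DIM('v)" "lam i t > 0" "x = vv i t" by auto
    then have "op_form (L t) x x > 0" using ofv[of i i] by simp
    moreover have "x \<in> b0" unfolding b0_def vvs_def using i by auto
    ultimately show "x \<in> {x\<in>b0. op_form (L t) x x > 0}" by simp
  qed
  also have "card ((\<lambda>i. vv i t) ` {i. i < DIM('v) \<and> lam i t > 0}) = card {i. i < DIM('v) \<and> lam i t > 0}"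
    by (rule card_image, rule inj_on_subset[OF inj_vv[OF t]]) auto
  finally show ?thesis unfolding coindex_op_def .
qed

lemma ker_L0: "{x. blinfun_apply (L t0) x = 0} = span (vvs t0 {i. i < DIM('v) \<and> lam i t0 = 0})"
  (is "_ = span (vvs t0 ?K)")
proof (intro equalityI subsetI)
  have K: "?K \<subseteq> {..<DIM('v)}" by auto
  fix x assume "x \<in> {x. blinfun_apply (L t0) x = 0}"
  then have Lx: "blinfun_apply (L t0) x = 0" by simp
  have z: "inner x (vv i t0) = 0" if "i < DIM('v)" "i \<notin> ?K" for i
  proof -
    have "lam i t0 \<noteq> 0" using that by simp
    moreover have "lam i t0 * inner x (vv i t0) = 0" using L_inner_vv[OF t0S that(1), of x] Lx by simp
    ultimately show ?thesis by simp
  qed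
  have "x = (\<Sum>i<DIM('v). inner x (vv i t0) *\<^sub>R vv i t0)" by (rule expand_full[OF t0S])
  also have "\<dots> = (\<Sum>i\<in>?K. inner x (vv i t0) *\<^sub>R vv i t0)"
  proof (rule sum.mono_neutral_right)
    show "\<forall>i\<in>{..<DIM('v)} - ?K. inner x (vv i t0) *\<^sub>R vv i t0 = 0"
    proof
      fix i assume "i \<in> {..<DIM('v)} - ?K"
      then have "i < DIM('v)" "i \<notin> ?K" by auto
      then show "inner x (vv i t0) *\<^sub>R vv i t0 = 0" using z by simp
    qed
  qed (use K in auto)
  finally have "x = (\<Sum>i\<in>?K. inner x (vv i t0) *\<^sub>R vv i t0)" .
  then show "x \<in> span (vvs t0 ?K)" using in_span_sub[OF K, of "\<lambda>i. inner x (vv i t0)" t0] by simp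
next
  have K: "?K \<subseteq> {..<DIM('v)}" by auto
  fix x assume x: "x \<in> span (vvs t0 ?K)"
  have xe: "x = (\<Sum>i\<in>?K. inner x (vv i t0) *\<^sub>R vv i t0)" by (rule expand_sub[OF t0S K x])
  have Ls: "blinfun_apply (L t0) (\<Sum>i\<in>?K. c i *\<^sub>R vv i t0) = (\<Sum>i\<in>?K. c i *\<^sub>R blinfun_apply (L t0) (vv i t0))" for c
    by (simp add: blinfun.sum_right blinfun.scaleR_right)
  have "blinfun_apply (L t0) x = blinfun_apply (L t0) (\<Sum>i\<in>?K. inner x (vv i t0) *\<^sub>R vv i t0)"
    using arg_cong[OF xe, of "blinfun_apply (L t0)"] .
  also have "\<dots> = (\<Sum>i\<in>?K. inner x (vv i t0) *\<^sub>R blinfun_apply (L t0) (vv i t0))" by (rule Ls)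
  finally have "blinfun_apply (L t0) x = (\<Sum>i\<in>?K. inner x (vv i t0) *\<^sub>R blinfun_apply (L t0) (vv i t0))" .
  also have "\<dots> = 0" by (rule sum.neutral) (use vv_eig t0S in auto)
  finally show "x \<in> {x. blinfun_apply (L t0) x = 0}" by simp
qed

lemma null_L0: "nullity_op (L t0) = card {i. i < DIM('v) \<and> lam i t0 = 0}"
proof -
  have K: "{i. i < DIM('v) \<and> lam i t0 = 0} \<subseteq> {..<DIM('v)}" by auto
  have "nullity_op (L t0) = card (vvs t0 {i. i < DIM('v) \<and> lam i t0 = 0})"
    unfolding nullity_op_def ker_L0 by (rule dim_span_eq_card_independent[OF indep_vv[OF t0S K]])
  also have "\<dots> = card {i. i < DIM('v) \<and> lam i t0 = 0}" unfolding vvs_def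
    by (rule card_image, rule inj_on_subset[OF inj_vv[OF t0S]]) auto
  finally show ?thesis .
qed

lemma null_L: assumes t: "t \<in> S" "t \<noteq> t0" shows "nullity_op (L t) = 0"
proof -
  have "{x. blinfun_apply (L t) x = 0} = {0}"
  proof (intro equalityI subsetI)
    fix x assume "x \<in> {x. blinfun_apply (L t) x = 0}"
    then have e: "blinfun_apply (L t) x = blinfun_apply (L t) 0" by simp
    have ij: "inj (blinfun_apply (L t))" using L_inv t bij_is_inj by blast
    have "x = 0" by (rule injD[OF ij e])
    then show "x \<in> {0}" by simp
  qed simp
  then show ?thesis unfolding nullity_op_def by (simp add: dim_insert)
qed

definition pp :: "nat \<Rightarrow> nat" where "pp i = (LEAST j. hderiv S (lam i) j t0 \<noteq> 0)"
definition cc :: "nat \<Rightarrow> real" where "cc i = hderiv S (lam i) (pp i) t0"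

lemma ex_nz: assumes i: "i < DIM('v)" shows "\<exists>j. hderiv S (lam i) j t0 \<noteq> 0"
proof (rule ccontr)
  assume "\<not> ?thesis"
  then have z: "\<forall>j. hderiv S (lam i) j t0 = 0" by simp
  then obtain c where c: "\<forall>t\<in>S. lam i t = c" using finite_order i by blast
  have "lam i t0 = 0" using z ds0[OF dlam[OF i] t0S] by metis
  then have "lam i (t0 + \<epsilon>) = 0" using c t0S eps by (auto simp: S_def)
  then show False using lam_nz[of "t0+\<epsilon>" i] i eps by (auto simp: S_def)
qed

lemma pp_props: assumes i: "i < DIM('v)"
  shows "cc i \<noteq> 0" "\<forall>j<pp i. hderiv S (lam i) j t0 = 0"
proof -
  show "cc i \<noteq> 0" unfolding cc_def pp_def by (rule LeastI_ex) (rule ex_nz[OF i])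
  show "\<forall>j<pp i. hderiv S (lam i) j t0 = 0" unfolding pp_def using not_less_Least by blast
qed

lemma Ik_set: assumes k: "k \<ge> 1"
  shows "{i\<in>Ik k. Q (hderiv S (lam i) k t0) \<and> hderiv S (lam i) k t0 \<noteq> 0} = {i. i < DIM('v) \<and> pp i = k \<and> Q (cc i)}"
proof (intro equalityI subsetI)
  fix i assume "i \<in> {i\<in>Ik k. Q (hderiv S (lam i) k t0) \<and> hderiv S (lam i) k t0 \<noteq> 0}"
  then have i: "i < DIM('v)" "\<forall>j<k. hderiv S (lam i) j t0 = 0" "Q (hderiv S (lam i) k t0)" "hderiv S (lam i) k t0 \<noteq> 0"
    unfolding Ik_def by auto
  have "pp i \<le> k" unfolding pp_def by (rule Least_le) (use i in auto)
  moreover have "\<not> pp i < k" using i(2) pp_props(1)[OF i(1)] unfolding cc_def by auto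
  ultimately have "pp i = k" by simp
  then show "i \<in> {i. i < DIM('v) \<and> pp i = k \<and> Q (cc i)}" using i unfolding cc_def by auto
next
  fix i assume "i \<in> {i. i < DIM('v) \<and> pp i = k \<and> Q (cc i)}"
  then have i: "i < DIM('v)" "pp i = k" "Q (cc i)" by auto
  show "i \<in> {i\<in>Ik k. Q (hderiv S (lam i) k t0) \<and> hderiv S (lam i) k t0 \<noteq> 0}"
    using i pp_props[OF i(1)] unfolding Ik_def cc_def by auto
qed

lemma pc_eq: "k \<ge> 1 \<Longrightarrow> int (partial_coindex L S t0 k) = (\<Sum>i<DIM('v). if pp i = k \<and> cc i > 0 then 1 else 0)"
proof -
  assume k: "k \<ge> 1"
  have "{i\<in>Ik k. hderiv S (lam i) k t0 > 0} = {i\<in>Ik k. hderiv S (lam i) k t0 > 0 \<and> hderiv S (lam i) k t0 \<noteq> 0}" by auto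
  also have "\<dots> = {i. i < DIM('v) \<and> pp i = k \<and> cc i > 0}" by (rule Ik_set[OF k, of "\<lambda>r. r > 0"])
  finally show ?thesis using partial_counts[OF k] card_sum_int[of "DIM('v)" "\<lambda>i. pp i = k \<and> cc i > 0"] by simp
qed

lemma pi_eq: "k \<ge> 1 \<Longrightarrow> int (partial_index L S t0 k) = (\<Sum>i<DIM('v). if pp i = k \<and> cc i < 0 then 1 else 0)"
proof -
  assume k: "k \<ge> 1"
  have "{i\<in>Ik k. hderiv S (lam i) k t0 < 0} = {i\<in>Ik k. hderiv S (lam i) k t0 < 0 \<and> hderiv S (lam i) k t0 \<noteq> 0}" by auto
  also have "\<dots> = {i. i < DIM('v) \<and> pp i = k \<and> cc i < 0}" by (rule Ik_set[OF k, of "\<lambda>r. r < 0"])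
  finally show ?thesis using partial_counts[OF k] card_sum_int[of "DIM('v)" "\<lambda>i. pp i = k \<and> cc i < 0"] by simp
qed

lemma signs: assumes i: "i < DIM('v)"
  shows "lam i (t0 + \<epsilon>) > 0 \<longleftrightarrow> cc i > 0"
    and "lam i (t0 - \<epsilon>) > 0 \<longleftrightarrow> (even (pp i) \<and> cc i > 0) \<or> (odd (pp i) \<and> cc i < 0)"
    and "lam i t0 > 0 \<longleftrightarrow> pp i = 0 \<and> cc i > 0"
    and "lam i t0 = 0 \<longleftrightarrow> pp i \<noteq> 0"
proof -
  have D: "deriv_seq {t0-\<epsilon>..t0+\<epsilon>} (lam i) (hderiv S (lam i))" using dlam[OF i] S_def by simp
  have nzf: "\<forall>t\<in>{t0-\<epsilon>..t0+\<epsilon>}. t \<noteq> t0 \<longrightarrow> lam i t \<noteq> 0" using lam_nz i S_def by auto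
  have se: "lam i (t0+\<epsilon>) * cc i > 0 \<and> (-1)^pp i * lam i (t0-\<epsilon>) * cc i > 0"
    unfolding cc_def by (rule sign_ends[OF eps D]) (use pp_props[OF i] nzf in \<open>auto simp: cc_def\<close>)
  have c: "cc i \<noteq> 0" using pp_props[OF i] by simp
  show "lam i (t0 + \<epsilon>) > 0 \<longleftrightarrow> cc i > 0" using se c by (auto simp: zero_less_mult_iff)
  show "lam i (t0 - \<epsilon>) > 0 \<longleftrightarrow> (even (pp i) \<and> cc i > 0) \<or> (odd (pp i) \<and> cc i < 0)"
    using se c by (cases "even (pp i)") (auto simp: zero_less_mult_iff mult_less_0_iff)
  have l0: "lam i t0 = hderiv S (lam i) 0 t0" using ds0[OF dlam[OF i] t0S] by simp
  have "lam i t0 = (if pp i = 0 then cc i else 0)"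
    using l0 pp_props(2)[OF i] unfolding cc_def by auto
  then show "lam i t0 > 0 \<longleftrightarrow> pp i = 0 \<and> cc i > 0" "lam i t0 = 0 \<longleftrightarrow> pp i \<noteq> 0" using c by auto
qed

end



context P29 begin

lemma sum_swap_ind: "(\<Sum>k=1..N. (\<Sum>i<DIM('v). f k i :: int)) = (\<Sum>i<DIM('v). (\<Sum>k=1..N. f k i))"
  by (rule sum.swap)

lemma part3:
  "\<exists>N. (\<forall>k>N. partial_coindex L S t0 k = 0 \<and> partial_index L S t0 k = 0)
      \<and> int (coindex_op (L (t0 + \<epsilon>))) - int (coindex_op (L t0))
          = (\<Sum>k=1..N. int (partial_coindex L S t0 k))
      \<and> int (coindex_op (L t0)) - int (coindex_op (L (t0 - \<epsilon>)))
          = - (\<Sum>k=1..N. int (partial_index L S t0 (2*k - 1)) + int (partial_coindex L S t0 (2*k)))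
      \<and> int (coindex_op (L (t0 + \<epsilon>))) - int (coindex_op (L (t0 - \<epsilon>)))
          = (\<Sum>k=1..N. partial_signature L S t0 (2*k - 1))
      \<and> int (ext_coindex_op (L (t0 + \<epsilon>))) - int (ext_coindex_op (L t0))
          = (\<Sum>k=1..N. int (partial_coindex L S t0 k)) - int (dim {x. blinfun_apply (L t0) x = 0})
      \<and> int (ext_coindex_op (L t0)) - int (ext_coindex_op (L (t0 - \<epsilon>)))
          = - (\<Sum>k=1..N. int (partial_index L S t0 (2*k - 1)) + int (partial_coindex L S t0 (2*k)))
            + int (dim {x. blinfun_apply (L t0) x = 0})"
proof -
  define N where "N = Max (pp ` {..<DIM('v)})"
  have pN: "pp i \<le> N" if "i < DIM('v)" for i unfolding N_def using that by (intro Max_ge) auto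
  have cnz: "cc i \<noteq> 0" if "i < DIM('v)" for i using pp_props(1)[OF that] .
  have tp: "t0 + \<epsilon> \<in> S" and tm: "t0 - \<epsilon> \<in> S" using eps S_def by auto
  have tpn: "t0 + \<epsilon> \<noteq> t0" and tmn: "t0 - \<epsilon> \<noteq> t0" using eps by auto
  have Ap: "int (coindex_op (L (t0 + \<epsilon>))) = (\<Sum>i<DIM('v). if cc i > 0 then 1 else 0)"
    unfolding coindex_L[OF tp] card_sum_int by (rule sum.cong) (auto simp: signs)
  have A0: "int (coindex_op (L t0)) = (\<Sum>i<DIM('v). if pp i = 0 \<and> cc i > 0 then 1 else 0)"
    unfolding coindex_L[OF t0S] card_sum_int by (rule sum.cong) (auto simp: signs)
  have Am: "int (coindex_op (L (t0 - \<epsilon>))) = (\<Sum>i<DIM('v). if (even (pp i) \<and> cc i > 0) \<or> (odd (pp i) \<and> cc i < 0) then 1 else 0)"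
    unfolding coindex_L[OF tm] card_sum_int by (rule sum.cong) (auto simp: signs)
  have Nl: "int (dim {x. blinfun_apply (L t0) x = 0}) = (\<Sum>i<DIM('v). if pp i \<noteq> 0 then 1 else 0)"
    using null_L0 unfolding nullity_op_def card_sum_int by (simp add: card_sum_int) (rule sum.cong, auto simp: signs)
  have Ep: "ext_coindex_op (L (t0 + \<epsilon>)) = coindex_op (L (t0 + \<epsilon>))"
    unfolding ext_coindex_op_def using null_L[OF tp tpn] by simp
  have Em: "ext_coindex_op (L (t0 - \<epsilon>)) = coindex_op (L (t0 - \<epsilon>))"
    unfolding ext_coindex_op_def using null_L[OF tm tmn] by simp
  have E0: "int (ext_coindex_op (L t0)) = int (coindex_op (L t0)) + int (dim {x. blinfun_apply (L t0) x = 0})"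
    unfolding ext_coindex_op_def nullity_op_def by simp
  have S1: "(\<Sum>k=1..N. int (partial_coindex L S t0 k)) = (\<Sum>i<DIM('v). if pp i \<noteq> 0 \<and> cc i > 0 then 1 else 0)"
  proof -
    have "(\<Sum>k=1..N. int (partial_coindex L S t0 k)) = (\<Sum>k=1..N. \<Sum>i<DIM('v). if pp i = k \<and> cc i > 0 then 1 else 0)"
      by (rule sum.cong) (auto simp: pc_eq)
    also have "\<dots> = (\<Sum>i<DIM('v). \<Sum>k=1..N. if pp i = k \<and> cc i > 0 then 1 else 0)" by (rule sum.swap)
    also have "\<dots> = (\<Sum>i<DIM('v). if pp i \<noteq> 0 \<and> cc i > 0 then 1 else 0)"
      by (rule sum.cong) (use pN in \<open>auto simp: ind_delta\<close>)
    finally show ?thesis .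
  qed
  have S2: "(\<Sum>k=1..N. int (partial_index L S t0 (2*k - 1)) + int (partial_coindex L S t0 (2*k)))
     = (\<Sum>i<DIM('v). (if odd (pp i) \<and> cc i < 0 then 1 else 0) + (if even (pp i) \<and> pp i \<noteq> 0 \<and> cc i > 0 then 1 else 0))"
  proof -
    have "(\<Sum>k=1..N. int (partial_index L S t0 (2*k - 1)) + int (partial_coindex L S t0 (2*k)))
       = (\<Sum>k=1..N. \<Sum>i<DIM('v). (if pp i = 2*k - 1 \<and> cc i < 0 then 1 else 0) + (if pp i = 2*k \<and> cc i > 0 then 1 else 0))"
    proof (rule sum.cong[OF refl])
      fix k assume "k \<in> {1..N}"
      then have "2*k - 1 \<ge> 1" "2*k \<ge> 1" by auto
      then show "int (partial_index L S t0 (2*k - 1)) + int (partial_coindex L S t0 (2*k))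
         = (\<Sum>i<DIM('v). (if pp i = 2*k - 1 \<and> cc i < 0 then 1 else 0) + (if pp i = 2*k \<and> cc i > 0 then 1 else 0))"
        by (simp add: pc_eq pi_eq sum.distrib)
    qed
    also have "\<dots> = (\<Sum>i<DIM('v). \<Sum>k=1..N. (if pp i = 2*k - 1 \<and> cc i < 0 then 1 else 0) + (if pp i = 2*k \<and> cc i > 0 then 1 else 0))"
      by (rule sum.swap)
    also have "\<dots> = (\<Sum>i<DIM('v). (if odd (pp i) \<and> cc i < 0 then 1 else 0) + (if even (pp i) \<and> pp i \<noteq> 0 \<and> cc i > 0 then 1 else 0))"
    proof (rule sum.cong[OF refl])
      fix i assume "i \<in> {..<DIM('v)}"
      then have pNi: "pp i \<le> N" using pN by auto
      show "(\<Sum>k=1..N. (if pp i = 2*k - 1 \<and> cc i < 0 then 1 else 0) + (if pp i = 2*k \<and> cc i > 0 then 1 else 0))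
          = (if odd (pp i) \<and> cc i < 0 then 1 else 0) + (if even (pp i) \<and> pp i \<noteq> 0 \<and> cc i > 0 then (1::int) else 0)"
        unfolding sum.distrib ind_odd[OF pNi] ind_even[OF pNi] by (rule refl)
    qed
    finally show ?thesis .
  qed
  have S3: "(\<Sum>k=1..N. partial_signature L S t0 (2*k - 1))
     = (\<Sum>i<DIM('v). (if odd (pp i) \<and> cc i > 0 then 1 else 0) - (if odd (pp i) \<and> cc i < 0 then 1 else 0))"
  proof -
    have "(\<Sum>k=1..N. partial_signature L S t0 (2*k - 1))
       = (\<Sum>k=1..N. \<Sum>i<DIM('v). (if pp i = 2*k - 1 \<and> cc i > 0 then 1 else 0) - (if pp i = 2*k - 1 \<and> cc i < 0 then 1 else 0))"
    proof (rule sum.cong[OF refl])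
      fix k assume "k \<in> {1..N}"
      then have k1: "2*k - 1 \<ge> 1" by auto
      have "partial_signature L S t0 (2*k - 1) = int (partial_coindex L S t0 (2*k - 1)) - int (partial_index L S t0 (2*k - 1))"
        unfolding partial_signature_def signature_form_def partial_coindex_def partial_index_def ..
      then show "partial_signature L S t0 (2*k - 1)
         = (\<Sum>i<DIM('v). (if pp i = 2*k - 1 \<and> cc i > 0 then 1 else 0) - (if pp i = 2*k - 1 \<and> cc i < 0 then 1 else 0))"
        using k1 by (simp add: pc_eq pi_eq sum_subtractf)
    qed
    also have "\<dots> = (\<Sum>i<DIM('v). \<Sum>k=1..N. (if pp i = 2*k - 1 \<and> cc i > 0 then 1 else 0) - (if pp i = 2*k - 1 \<and> cc i < 0 then 1 else 0))"
      by (rule sum.swap)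
    also have "\<dots> = (\<Sum>i<DIM('v). (if odd (pp i) \<and> cc i > 0 then 1 else 0) - (if odd (pp i) \<and> cc i < 0 then 1 else 0))"
    proof (rule sum.cong[OF refl])
      fix i assume "i \<in> {..<DIM('v)}"
      then have pNi: "pp i \<le> N" using pN by auto
      show "(\<Sum>k=1..N. (if pp i = 2*k - 1 \<and> cc i > 0 then 1 else 0) - (if pp i = 2*k - 1 \<and> cc i < 0 then 1 else 0))
          = (if odd (pp i) \<and> cc i > 0 then 1 else 0) - (if odd (pp i) \<and> cc i < 0 then (1::int) else 0)"
        unfolding sum_subtractf ind_odd[OF pNi] by (rule refl)
    qed
    finally show ?thesis .
  qed
  have zero: "partial_coindex L S t0 k = 0 \<and> partial_index L S t0 k = 0" if k: "k > N" for k
  proof -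
    have k1: "k \<ge> 1" using k by simp
    have "int (partial_coindex L S t0 k) = 0" unfolding pc_eq[OF k1]
      by (rule sum.neutral) (use pN k in fastforce)
    moreover have "int (partial_index L S t0 k) = 0" unfolding pi_eq[OF k1]
      by (rule sum.neutral) (use pN k in fastforce)
    ultimately show ?thesis by simp
  qed
  have f1: "int (coindex_op (L (t0 + \<epsilon>))) - int (coindex_op (L t0)) = (\<Sum>k=1..N. int (partial_coindex L S t0 k))"
    unfolding Ap A0 S1 sum_subtractf[symmetric] by (rule sum.cong) (use cnz in auto)
  have f2: "int (coindex_op (L t0)) - int (coindex_op (L (t0 - \<epsilon>)))
          = - (\<Sum>k=1..N. int (partial_index L S t0 (2*k - 1)) + int (partial_coindex L S t0 (2*k)))"
    unfolding A0 Am S2 sum_subtractf[symmetric] sum_negf[symmetric] by (rule sum.cong) (use cnz in auto)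
  have f3: "int (coindex_op (L (t0 + \<epsilon>))) - int (coindex_op (L (t0 - \<epsilon>))) = (\<Sum>k=1..N. partial_signature L S t0 (2*k - 1))"
    unfolding Ap Am S3 sum_subtractf[symmetric] by (rule sum.cong) (use cnz in auto)
  have f0: "int (coindex_op (L t0)) + int (dim {x. blinfun_apply (L t0) x = 0}) =
      int (coindex_op (L t0)) + int (dim {x. blinfun_apply (L t0) x = 0})" ..
  show ?thesis
    apply (rule exI[of _ N])
    using zero f1 f2 f3 Ep Em E0 by simp
qed

end


theorem proposition2p9:
  fixes L :: "real \<Rightarrow> ('v::euclidean_space \<Rightarrow>\<^sub>L 'v)"
    and lam :: "nat \<Rightarrow> real \<Rightarrow> real"
    and vv :: "nat \<Rightarrow> real \<Rightarrow> 'v"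
    and t0 \<epsilon> :: real
  defines "S \<equiv> {t0 - \<epsilon> .. t0 + \<epsilon>}"
  assumes eps: "\<epsilon> > 0"
    and L_smooth: "smooth_on S L"
    and L_sym: "\<forall>t\<in>S. \<forall>x y. inner (blinfun_apply (L t) x) y = inner x (blinfun_apply (L t) y)"
    and L_inv: "\<forall>t\<in>S. t \<noteq> t0 \<longrightarrow> bij (blinfun_apply (L t))"
    and L_sing: "\<not> bij (blinfun_apply (L t0))"
    and lam_smooth: "\<forall>i<DIM('v). smooth_on S (lam i)"
    and finite_order: "\<forall>i<DIM('v). (\<not> (\<exists>c. \<forall>t\<in>S. lam i t = c)) \<longrightarrow> (\<exists>j. hderiv S (lam i) j t0 \<noteq> 0)"
    and vv_smooth: "\<forall>i<DIM('v). smooth_on S (vv i)"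
    and vv_orth: "\<forall>t\<in>S. \<forall>i<DIM('v). \<forall>j<DIM('v). inner (vv i t) (vv j t) = (if i = j then 1 else 0)"
    and vv_eig: "\<forall>t\<in>S. \<forall>i<DIM('v). blinfun_apply (L t) (vv i t) = lam i t *\<^sub>R vv i t"
  shows
    "(\<forall>k\<ge>1. W_space L S t0 k = span {vv i t0 | i. i < DIM('v) \<and> (\<forall>j<k. hderiv S (lam i) j t0 = 0)})
   \<and> (\<forall>k\<ge>1. \<forall>i<DIM('v). (\<forall>j<k. hderiv S (lam i) j t0 = 0) \<longrightarrow>
        (\<forall>c w. w \<in> W_space L S t0 k \<longrightarrow>
           B_form L S t0 k (c *\<^sub>R vv i t0) w = hderiv S (lam i) k t0 / fact k * inner (c *\<^sub>R vv i t0) w))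
   \<and> (\<exists>N. (\<forall>k>N. partial_coindex L S t0 k = 0 \<and> partial_index L S t0 k = 0)
      \<and> int (coindex_op (L (t0 + \<epsilon>))) - int (coindex_op (L t0))
          = (\<Sum>k=1..N. int (partial_coindex L S t0 k))
      \<and> int (coindex_op (L t0)) - int (coindex_op (L (t0 - \<epsilon>)))
          = - (\<Sum>k=1..N. int (partial_index L S t0 (2*k - 1)) + int (partial_coindex L S t0 (2*k)))
      \<and> int (coindex_op (L (t0 + \<epsilon>))) - int (coindex_op (L (t0 - \<epsilon>)))
          = (\<Sum>k=1..N. partial_signature L S t0 (2*k - 1))
      \<and> int (ext_coindex_op (L (t0 + \<epsilon>))) - int (ext_coindex_op (L t0))
          = (\<Sum>k=1..N. int (partial_coindex L S t0 k)) - int (dim {x. blinfun_apply (L t0) x = 0})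
      \<and> int (ext_coindex_op (L t0)) - int (ext_coindex_op (L (t0 - \<epsilon>)))
          = - (\<Sum>k=1..N. int (partial_index L S t0 (2*k - 1)) + int (partial_coindex L S t0 (2*k)))
            + int (dim {x. blinfun_apply (L t0) x = 0}))"
proof -
  have Sd: "S = {t0 - \<epsilon> .. t0 + \<epsilon>}" using assms by simp
  interpret P: P29 L lam vv t0 \<epsilon> S
    by unfold_locales (use assms Sd in auto)
  have p1: "\<forall>k\<ge>1. W_space L S t0 k = span {vv i t0 | i. i < DIM('v) \<and> (\<forall>j<k. hderiv S (lam i) j t0 = 0)}"
  proof (intro allI impI)
    fix k :: nat assume k: "k \<ge> 1"
    have "P.vvs t0 (P.Ik k) = {vv i t0 | i. i < DIM('v) \<and> (\<forall>j<k. hderiv S (lam i) j t0 = 0)}"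
      unfolding P.vvs_def P.Ik_def by auto
    then show "W_space L S t0 k = span {vv i t0 | i. i < DIM('v) \<and> (\<forall>j<k. hderiv S (lam i) j t0 = 0)}"
      using P.W_eq[OF k] by simp
  qed
  have p2: "\<forall>k\<ge>1. \<forall>i<DIM('v). (\<forall>j<k. hderiv S (lam i) j t0 = 0) \<longrightarrow>
        (\<forall>c w. w \<in> W_space L S t0 k \<longrightarrow>
           B_form L S t0 k (c *\<^sub>R vv i t0) w = hderiv S (lam i) k t0 / fact k * inner (c *\<^sub>R vv i t0) w)"
    using P.part2 by blast
  show ?thesis using p1 p2 P.part3 by blast
qed

end
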